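(* Assume Case 4 holds with index $k$. Let $(C,D)=(n_{k+1},m_{k+1})$ and for $n\ge1$ put $(C_n,D_n)=(\gamma_n-(\gamma-C)d^{n-1},\ Dd^{n-1})$ and $(C_n^*,D_n^* )=\big((\delta^{n-1}+\delta^{n-2}D+\cdots+D^{n-1})C,\ D^n\big)$. (i) If $\delta>T_k$, then for every $n\ge1$, $(C_n,D_n)$ is the vertex of $N(Q^n)$ immediately following $(\gamma_n,d^n)$ (in order of increasing $x$-coordinate), the segment joining them has slope $-(l_1+l_2)^{-1}$, and $\delta^n$ is strictly bigger than the $y$-intercept of the line through these two points. (ii) If $\delta=T_k$ and $m_{k+1}>0$, then for every $n\ge1$, $(C_n^*,D_n^* )$ is the vertex of $N(Q^n)$ immediately following $(\gamma_n,d^n)$, the segment joining them has slope $-(l_1+l_2)^{-1}$, and $\delta^n$ equals the $y$-intercept of the line through these two points.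
   Context: Let $f(z,w)=(p(z),q(z,w))$ be a holomorphic skew product germ at the origin of $\mathbb{C}^2$ with $f(0,0)=(0,0)$, where $p(z)=a_\delta z^\delta+O(z^{\delta+1})$ with $a_\delta\neq0$ and integer $\delta\ge1$, and $q(z,w)=\sum_{i+j\ge1}b_{ij}z^iw^j$ is not identically zero. For $n\ge1$ write $f^n=(p^n,Q^n)$. The Newton polygon $N(g)$ of a nonzero germ $g=\sum g_{ij}z^iw^j$ is the convex hull of $\bigcup_{g_{ij}\neq0}\{(x,y):x\ge i,\ y\ge j\}$. Let $(n_1,m_1),\dots,(n_s,m_s)$ be the vertices of $N(q)$ with $n_1<\cdots<n_s$, $m_1>\cdots>m_s$; for $1\le k\le s-1$ let $T_k$ be the $y$-intercept of the line through $(n_k,m_k)$ and $(n_{k+1},m_{k+1})$. Case 4 means: $s>2$ and $T_k\le\delta\le T_{k-1}$ for some $2\le k\le s-1$; for this $k$ set $(\gamma,d)=(n_k,m_k)$, $l_1=\frac{n_k-n_{k-1}}{m_{k-1}-m_k}$ and $l_2$ defined by $l_1+l_2=\frac{n_{k+1}-n_k}{m_k-m_{k+1}}$. Define $\gamma_n=\gamma(\delta^{n-1}+\delta^{n-2}d+\cdots+d^{n-1})$. *)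

theory Defs
  imports "HOL-Analysis.Analysis" "HOL-Computational_Algebra.Formal_Power_Series"
begin

text \<open>Bivariate formal power series in (z,w) are represented as complex fps fps:
  the outer variable is w, the inner one is z.  The coefficient of z^i w^j of F is
  bcoeff F i j.\<close>

type_synonym bfps = "complex fps fps"

definition bcoeff :: "bfps \<Rightarrow> nat \<Rightarrow> nat \<Rightarrow> complex" where
  "bcoeff F i j = fps_nth (fps_nth F j) i"

definition convergent_fps1 :: "complex fps \<Rightarrow> bool" where
  "convergent_fps1 P \<longleftrightarrow> (\<exists>M R::real. \<forall>i. norm (fps_nth P i) \<le> M * R ^ i)"

definition convergent_fps2 :: "bfps \<Rightarrow> bool" where
  "convergent_fps2 F \<longleftrightarrow> (\<exists>M R::real. \<forall>i j. norm (bcoeff F i j) \<le> M * R ^ (i + j))"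

text \<open>Substitution q(P(z), G(z,w)) for P with P(0)=0 and G(0,0)=0: the coefficient
  of z^a w^b only receives contributions from the terms q_ij P^i G^j with i+j \<le> a+b.\<close>
definition bsubst :: "bfps \<Rightarrow> complex fps \<Rightarrow> bfps \<Rightarrow> bfps" where
  "bsubst q P G = Abs_fps (\<lambda>b. Abs_fps (\<lambda>a.
     bcoeff (\<Sum>i\<le>a+b. \<Sum>j\<le>a+b-i.
        fps_const (fps_const (bcoeff q i j)) * fps_const P ^ i * G ^ j) a b))"

text \<open>Iterates f^n = (p^n, Q^n) of the skew product f = (p,q), with f^(n+1) = f o f^n.\<close>
primrec piter :: "complex fps \<Rightarrow> nat \<Rightarrow> complex fps" where
  "piter p 0 = fps_X"
| "piter p (Suc n) = p oo piter p n"

primrec Qiter :: "complex fps \<Rightarrow> bfps \<Rightarrow> nat \<Rightarrow> bfps" where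
  "Qiter p q 0 = fps_X"
| "Qiter p q (Suc n) = bsubst q (piter p n) (Qiter p q n)"

definition newton_polygon :: "bfps \<Rightarrow> (real \<times> real) set" where
  "newton_polygon g = convex hull
     (\<Union>{{(x, y). real i \<le> x \<and> real j \<le> y} | i j. bcoeff g i j \<noteq> 0})"

definition vertices :: "bfps \<Rightarrow> (real \<times> real) set" where
  "vertices g = {v. v extreme_point_of newton_polygon g}"

definition next_vertex :: "bfps \<Rightarrow> real \<times> real \<Rightarrow> real \<times> real \<Rightarrow> bool" where
  "next_vertex g v v' \<longleftrightarrow> v \<in> vertices g \<and> v' \<in> vertices g \<and> fst v < fst v' \<and>
     (\<forall>u \<in> vertices g. \<not> (fst v < fst u \<and> fst u < fst v'))"

definition yint :: "real \<times> real \<Rightarrow> real \<times> real \<Rightarrow> real" where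
  "yint P1 P2 = snd P1 - fst P1 * (snd P2 - snd P1) / (fst P2 - fst P1)"

definition slope :: "real \<times> real \<Rightarrow> real \<times> real \<Rightarrow> real" where
  "slope P1 P2 = (snd P2 - snd P1) / (fst P2 - fst P1)"

end

theory Submission
  imports Defs
begin

lemma sum_single:
  assumes "finite A" "a \<in> A" "\<And>x. x \<in> A \<Longrightarrow> x \<noteq> a \<Longrightarrow> f x = 0"
  shows "sum f A = f a"
  using assms by (simp add: sum.remove[OF assms(1,2)] sum.neutral)

lemma bcoeff_mult:
  "bcoeff (F * G) a b = (\<Sum>j=0..b. \<Sum>i=0..a. bcoeff F i j * bcoeff G (a - i) (b - j))"
  unfolding bcoeff_def by (simp add: fps_mult_nth fps_sum_nth)

definition edge :: "nat \<Rightarrow> nat \<Rightarrow> bfps \<Rightarrow> nat \<Rightarrow> nat \<Rightarrow> nat \<Rightarrow> bool" where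
  "edge u v F m l r \<longleftrightarrow> (\<forall>a b. bcoeff F a b \<noteq> 0 \<longrightarrow>
      m < u * a + v * b \<or> (u * a + v * b = m \<and> l \<le> a \<and> a \<le> r))"

lemma edge_mult:
  assumes "edge u v F m1 l1 r1" "edge u v G m2 l2 r2"
  shows "edge u v (F * G) (m1+m2) (l1+l2) (r1+r2)"
  unfolding edge_def
proof (intro allI impI)
  fix a b assume "bcoeff (F * G) a b \<noteq> 0"
  then obtain j i where ji: "j \<le> b" "i \<le> a" "bcoeff F i j * bcoeff G (a - i) (b - j) \<noteq> 0"
    unfolding bcoeff_mult by (meson atLeastAtMost_iff sum.not_neutral_contains_not_neutral)
  then have f: "bcoeff F i j \<noteq> 0" and g: "bcoeff G (a-i) (b-j) \<noteq> 0" by auto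
  have e1: "m1 < u * i + v * j \<or> (u * i + v * j = m1 \<and> l1 \<le> i \<and> i \<le> r1)"
    using assms(1) f unfolding edge_def by blast
  have e2: "m2 < u * (a-i) + v * (b-j) \<or> (u * (a-i) + v * (b-j) = m2 \<and> l2 \<le> a-i \<and> a-i \<le> r2)"
    using assms(2) g unfolding edge_def by blast
  have s: "u * a + v * b = (u * i + v * j) + (u * (a-i) + v * (b-j))"
  proof -
    have "u * i \<le> u * a" "v * j \<le> v * b" using ji by simp_all
    then show ?thesis unfolding diff_mult_distrib2 by arith
  qed
  show "m1 + m2 < u * a + v * b \<or> (u * a + v * b = m1 + m2 \<and> l1 + l2 \<le> a \<and> a \<le> r1 + r2)"
    using e1 e2 s ji by auto
qed

lemma edge_mult_left:
  assumes "edge u v F m1 l1 r1" "edge u v G m2 l2 r2" "v > 0"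
    "u * l1 + v * y1 = m1" "u * l2 + v * y2 = m2"
  shows "bcoeff (F * G) (l1+l2) (y1+y2) = bcoeff F l1 y1 * bcoeff G l2 y2"
proof -
  let ?a = "l1+l2" and ?b = "y1+y2"
  have key: "i = l1 \<and> j = y1" if ji: "j \<le> ?b" "i \<le> ?a"
     "bcoeff F i j * bcoeff G (?a - i) (?b - j) \<noteq> 0" for i j
  proof -
    from ji have f: "bcoeff F i j \<noteq> 0" and g: "bcoeff G (?a-i) (?b-j) \<noteq> 0" by auto
    have e1: "m1 < u * i + v * j \<or> (u * i + v * j = m1 \<and> l1 \<le> i \<and> i \<le> r1)"
      using assms(1) f unfolding edge_def by blast
    have e2: "m2 < u * (?a-i) + v * (?b-j) \<or> (u * (?a-i) + v * (?b-j) = m2 \<and> l2 \<le> ?a-i \<and> ?a-i \<le> r2)"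
      using assms(2) g unfolding edge_def by blast
    have s: "u * ?a + v * ?b = (u * i + v * j) + (u * (?a-i) + v * (?b-j))"
    proof -
    have "u * i \<le> u * ?a" "v * j \<le> v * ?b" using ji by simp_all
    then show ?thesis unfolding diff_mult_distrib2 by arith
  qed
    have t: "u * ?a + v * ?b = m1 + m2" using assms(4,5) by (simp add: algebra_simps)
    have "u * i + v * j = m1" "l1 \<le> i" "l2 \<le> ?a - i" using e1 e2 s t by auto
    then have "i = l1" using ji by arith
    then have "v * j = v * y1" using \<open>u * i + v * j = m1\<close> assms(4) by (metis add_left_cancel)
    then have "j = y1" using assms(3) by simp
    with \<open>i = l1\<close> show ?thesis by simp
  qed
  have "bcoeff (F * G) ?a ?b = (\<Sum>j=0..?b. \<Sum>i=0..?a. bcoeff F i j * bcoeff G (?a - i) (?b - j))"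
    by (rule bcoeff_mult)
  also have "\<dots> = (\<Sum>i=0..?a. bcoeff F i y1 * bcoeff G (?a - i) (?b - y1))"
  proof (rule sum_single)
    fix j assume "j \<in> {0..?b}" "j \<noteq> y1"
    then show "(\<Sum>i=0..?a. bcoeff F i j * bcoeff G (?a - i) (?b - j)) = 0"
      using key by (intro sum.neutral) (metis atLeastAtMost_iff mult_eq_0_iff)
  qed auto
  also have "\<dots> = bcoeff F l1 y1 * bcoeff G (?a - l1) (?b - y1)"
  proof (rule sum_single)
    fix i assume "i \<in> {0..?a}" "i \<noteq> l1"
    then show "bcoeff F i y1 * bcoeff G (?a - i) (?b - y1) = 0"
      using key[of y1 i] by auto
  qed auto
  finally show ?thesis by simp
qed

lemma edge_mult_right:
  assumes "edge u v F m1 l1 r1" "edge u v G m2 l2 r2" "v > 0"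
    "u * r1 + v * y1 = m1" "u * r2 + v * y2 = m2"
  shows "bcoeff (F * G) (r1+r2) (y1+y2) = bcoeff F r1 y1 * bcoeff G r2 y2"
proof -
  let ?a = "r1+r2" and ?b = "y1+y2"
  have key: "i = r1 \<and> j = y1" if ji: "j \<le> ?b" "i \<le> ?a"
     "bcoeff F i j * bcoeff G (?a - i) (?b - j) \<noteq> 0" for i j
  proof -
    from ji have f: "bcoeff F i j \<noteq> 0" and g: "bcoeff G (?a-i) (?b-j) \<noteq> 0" by auto
    have e1: "m1 < u * i + v * j \<or> (u * i + v * j = m1 \<and> l1 \<le> i \<and> i \<le> r1)"
      using assms(1) f unfolding edge_def by blast
    have e2: "m2 < u * (?a-i) + v * (?b-j) \<or> (u * (?a-i) + v * (?b-j) = m2 \<and> l2 \<le> ?a-i \<and> ?a-i \<le> r2)"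
      using assms(2) g unfolding edge_def by blast
    have s: "u * ?a + v * ?b = (u * i + v * j) + (u * (?a-i) + v * (?b-j))"
    proof -
    have "u * i \<le> u * ?a" "v * j \<le> v * ?b" using ji by simp_all
    then show ?thesis unfolding diff_mult_distrib2 by arith
  qed
    have t: "u * ?a + v * ?b = m1 + m2" using assms(4,5) by (simp add: algebra_simps)
    have "u * i + v * j = m1" "i \<le> r1" "?a - i \<le> r2" using e1 e2 s t by auto
    then have "i = r1" using ji by arith
    then have "v * j = v * y1" using \<open>u * i + v * j = m1\<close> assms(4) by (metis add_left_cancel)
    then have "j = y1" using assms(3) by simp
    with \<open>i = r1\<close> show ?thesis by simp
  qed
  have "bcoeff (F * G) ?a ?b = (\<Sum>j=0..?b. \<Sum>i=0..?a. bcoeff F i j * bcoeff G (?a - i) (?b - j))"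
    by (rule bcoeff_mult)
  also have "\<dots> = (\<Sum>i=0..?a. bcoeff F i y1 * bcoeff G (?a - i) (?b - y1))"
  proof (rule sum_single)
    fix j assume "j \<in> {0..?b}" "j \<noteq> y1"
    then show "(\<Sum>i=0..?a. bcoeff F i j * bcoeff G (?a - i) (?b - j)) = 0"
      using key by (intro sum.neutral) (metis atLeastAtMost_iff mult_eq_0_iff)
  qed auto
  also have "\<dots> = bcoeff F r1 y1 * bcoeff G (?a - r1) (?b - y1)"
  proof (rule sum_single)
    fix i assume "i \<in> {0..?a}" "i \<noteq> r1"
    then show "bcoeff F i y1 * bcoeff G (?a - i) (?b - y1) = 0"
      using key[of y1 i] by auto
  qed auto
  finally show ?thesis by simp
qed

lemma bcoeff_one: "bcoeff 1 a b = (if a = 0 \<and> b = 0 then 1 else 0)"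
  unfolding bcoeff_def by (cases b; cases a) auto

lemma edge_one: "edge u v 1 0 0 0"
  unfolding edge_def bcoeff_one by auto

lemma edge_power:
  assumes "edge u v F m l r" "v > 0" "u * l + v * yl = m" "u * r + v * yr = m"
  shows "edge u v (F^j) (j * m) (j * l) (j * r) \<and> bcoeff (F^j) (j * l) (j * yl) = bcoeff F l yl ^ j
       \<and> bcoeff (F^j) (j * r) (j * yr) = bcoeff F r yr ^ j"
proof (induction j)
  case 0 then show ?case using edge_one by (simp add: bcoeff_one)
next
  case (Suc j)
  have h1: "u * (j * l) + v * (j * yl) = j * m" using assms(3) by (metis add_mult_distrib2 mult.left_commute)
  have h2: "u * (j * r) + v * (j * yr) = j * m" using assms(4) by (metis add_mult_distrib2 mult.left_commute)
  have E: "edge u v (F * F^j) (m + j * m) (l + j * l) (r + j * r)"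
    using edge_mult[OF assms(1) Suc[THEN conjunct1]] by simp
  have L: "bcoeff (F * F^j) (l + j * l) (yl + j * yl) = bcoeff F l yl * bcoeff (F^j) (j * l) (j * yl)"
    by (rule edge_mult_left[OF assms(1) Suc[THEN conjunct1] assms(2,3)]) (use h1 h2 in simp)
  have R: "bcoeff (F * F^j) (r + j * r) (yr + j * yr) = bcoeff F r yr * bcoeff (F^j) (j * r) (j * yr)"
    by (rule edge_mult_right[OF assms(1) Suc[THEN conjunct1] assms(2,4)]) (use h1 h2 in simp)
  show ?case using E L R Suc by simp
qed


lemma piter_sub:
  fixes p :: "complex fps"
  assumes "p \<noteq> 0" "subdegree p = \<delta>" "\<delta> \<ge> 1"
  shows "piter p n \<noteq> 0 \<and> subdegree (piter p n) = \<delta> ^ n"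
proof (induction n)
  case 0 then show ?case by (simp add: fps_X_power_subdegree[of 1, simplified])
next
  case (Suc n)
  define B where "B = piter p n"
  have B: "B \<noteq> 0" "subdegree B = \<delta>^n" using Suc by (auto simp: B_def)
  have e1: "\<delta>^n \<ge> 1" using assms(3) by simp
  have z: "fps_nth (p oo B) t = 0" if "t < \<delta> * \<delta>^n" for t
  proof -
    have "fps_nth (p oo B) t = (\<Sum>i=0..t. fps_nth p i * fps_nth (B^i) t)" by (rule fps_compose_nth)
    also have "\<dots> = 0"
    proof (rule sum.neutral, safe)
      fix i assume "i \<in> {0..t}"
      show "fps_nth p i * fps_nth (B^i) t = 0"
      proof (cases "i < \<delta>")
        case True then show ?thesis using assms(2) by auto
      next
        case False
        then have "t < i * \<delta>^n" using that by (meson less_le_trans mult_le_mono1 not_le)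
        then have "fps_nth (B^i) t = 0" using B by (intro nth_less_subdegree_zero) simp
        then show ?thesis by simp
      qed
    qed
    finally show ?thesis .
  qed
  have nz: "fps_nth (p oo B) (\<delta> * \<delta>^n) \<noteq> 0"
  proof -
    let ?t = "\<delta> * \<delta>^n"
    have "fps_nth (p oo B) ?t = (\<Sum>i=0..?t. fps_nth p i * fps_nth (B^i) ?t)" by (rule fps_compose_nth)
    also have "\<dots> = fps_nth p \<delta> * fps_nth (B^\<delta>) ?t"
    proof (rule sum_single)
      show "\<delta> \<in> {0..?t}" using e1 by simp
      fix i assume i: "i \<in> {0..?t}" "i \<noteq> \<delta>"
      show "fps_nth p i * fps_nth (B^i) ?t = 0"
      proof (cases "i < \<delta>")
        case True then show ?thesis using assms(2) by auto
      next
        case False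
        then have "i > \<delta>" using i by simp
        then have "?t < i * \<delta>^n" using e1 assms(3) by simp
        then have "fps_nth (B^i) ?t = 0" using B by (intro nth_less_subdegree_zero) simp
        then show ?thesis by simp
      qed
    qed simp
    also have "\<dots> \<noteq> 0"
    proof -
      have "fps_nth p \<delta> \<noteq> 0" using assms by auto
      moreover have "fps_nth (B^\<delta>) ?t \<noteq> 0"
        using B nth_subdegree_nonzero[of "B^\<delta>"] by (simp add: mult.commute)
      ultimately show ?thesis by simp
    qed
    finally show ?thesis .
  qed
  have "subdegree (p oo B) = \<delta> * \<delta>^n" by (rule subdegreeI[OF nz z])
  moreover have "p oo B \<noteq> 0" using nz by auto
  ultimately show ?case by (simp add: B_def)
qed


definition NPU :: "bfps \<Rightarrow> (real \<times> real) set" where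
  "NPU g = \<Union>{{(x, y). real i \<le> x \<and> real j \<le> y} | i j. bcoeff g i j \<noteq> 0}"

lemma NP_eq: "newton_polygon g = convex hull (NPU g)"
  unfolding newton_polygon_def NPU_def ..

lemma NPU_I: "bcoeff g i j \<noteq> 0 \<Longrightarrow> real i \<le> x \<Longrightarrow> real j \<le> y \<Longrightarrow> (x, y) \<in> NPU g"
  unfolding NPU_def by (rule UnionI[of "{(x, y). real i \<le> x \<and> real j \<le> y}"]) auto

lemma NPU_E: "P \<in> NPU g \<Longrightarrow> \<exists>i j. bcoeff g i j \<noteq> 0 \<and> real i \<le> fst P \<and> real j \<le> snd P"
  unfolding NPU_def by fastforce

lemma supp_in_NP: "bcoeff g i j \<noteq> 0 \<Longrightarrow> (real i, real j) \<in> newton_polygon g"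
  unfolding NP_eq by (rule hull_inc) (rule NPU_I, auto)


lemma NP_up:
  assumes "P \<in> newton_polygon g" "h \<ge> 0"
  shows "P + (0, h) \<in> newton_polygon g"
proof -
  have sub: "(+) (0, h) ` NPU g \<subseteq> NPU g"
  proof (rule image_subsetI)
    fix Q assume "Q \<in> NPU g"
    then obtain i j where ij: "bcoeff g i j \<noteq> 0" "real i \<le> fst Q" "real j \<le> snd Q"
      using NPU_E by blast
    have "real j \<le> h + snd Q" using ij(3) assms(2) by linarith
    then have "(fst Q, h + snd Q) \<in> NPU g" using NPU_I[OF ij(1) ij(2)] by blast
    then show "(0, h) + Q \<in> NPU g" by (cases Q) simp
  qed
  have "(0, h) + P \<in> (+) (0, h) ` (convex hull NPU g)" using assms(1) NP_eq by auto
  also have "\<dots> = convex hull ((+) (0, h) ` NPU g)" by (simp add: convex_hull_translation)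
  also have "\<dots> \<subseteq> convex hull NPU g" using sub by (rule hull_mono)
  finally show ?thesis by (simp add: NP_eq add.commute)
qed

definition redge :: "real \<Rightarrow> real \<Rightarrow> real \<Rightarrow> real \<Rightarrow> real \<Rightarrow> real \<times> real \<Rightarrow> bool" where
  "redge u v m xl xr P \<longleftrightarrow> m < u * fst P + v * snd P \<or>
     (u * fst P + v * snd P = m \<and> xl \<le> fst P \<and> fst P \<le> xr)"

lemma convex_redge:
  assumes "u > 0" "v > 0"
  shows "convex {P. redge u v m xl xr P}"
proof (rule convexI)
  fix x y :: "real \<times> real" and a b :: real
  assume x0: "x \<in> {P. redge u v m xl xr P}" and y0: "y \<in> {P. redge u v m xl xr P}"
    and ab0: "0 \<le> a" "0 \<le> b" "a + b = 1"
  have x: "redge u v m xl xr x" and y: "redge u v m xl xr y" using x0 y0 by auto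
  have ab: "0 \<le> a \<and> 0 \<le> b \<and> a + b = 1" using ab0 by simp
  let ?w = "\<lambda>P::real\<times>real. u * fst P + v * snd P"
  have w: "?w (a *\<^sub>R x + b *\<^sub>R y) = a * ?w x + b * ?w y"
    by (simp add: algebra_simps)
  have f: "fst (a *\<^sub>R x + b *\<^sub>R y) = a * fst x + b * fst y" by simp
  have wx: "?w x \<ge> m" and wy: "?w y \<ge> m" using x y unfolding redge_def by auto
  have "redge u v m xl xr (a *\<^sub>R x + b *\<^sub>R y)"
  proof (cases "a * ?w x + b * ?w y > m")
    case True then show ?thesis unfolding redge_def using w by simp
  next
    case False
    have "a * m \<le> a * ?w x" "b * m \<le> b * ?w y" using ab wx wy by (auto intro: mult_left_mono)
    moreover have am: "a * m + b * m = m" using ab by (metis distrib_right mult_1)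
    ultimately have eq: "a * ?w x + b * ?w y = m" using False by linarith
    have "a * (?w x - m) + b * (?w y - m) = 0" using eq am by (simp add: algebra_simps)
    moreover have "a * (?w x - m) \<ge> 0" "b * (?w y - m) \<ge> 0" using ab wx wy by auto
    ultimately have za: "a * (?w x - m) = 0" and zb: "b * (?w y - m) = 0" by linarith+
    have hx: "xl \<le> fst x \<and> fst x \<le> xr" if "a \<noteq> 0"
    proof -
      have "?w x = m" using za that by simp
      then show ?thesis using x unfolding redge_def by auto
    qed
    have hy: "xl \<le> fst y \<and> fst y \<le> xr" if "b \<noteq> 0"
    proof -
      have "?w y = m" using zb that by simp
      then show ?thesis using y unfolding redge_def by auto
    qed
    have a1: "a * xl \<le> a * fst x" "a * fst x \<le> a * xr"
      using hx ab by (cases "a = 0"; simp add: mult_left_mono)+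
    have b1: "b * xl \<le> b * fst y" "b * fst y \<le> b * xr"
      using hy ab by (cases "b = 0"; simp add: mult_left_mono)+
    have xl1: "a * xl + b * xl = xl" "a * xr + b * xr = xr" using ab by (metis distrib_right mult_1)+
    have lo: "xl \<le> a * fst x + b * fst y" using a1 b1 xl1 by linarith
    have hi: "a * fst x + b * fst y \<le> xr" using a1 b1 xl1 by linarith
    show ?thesis unfolding redge_def using w eq f lo hi by simp
  qed
  then show "a *\<^sub>R x + b *\<^sub>R y \<in> {P. redge u v m xl xr P}" by simp
qed

lemma NP_redge:
  assumes "u > 0" "v > 0"
    and supp: "\<And>i j. bcoeff g i j \<noteq> 0 \<Longrightarrow> redge u v m xl xr (real i, real j)"
    and P: "P \<in> newton_polygon g"
  shows "redge u v m xl xr P"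
proof -
  have "NPU g \<subseteq> {P. redge u v m xl xr P}"
  proof
    fix P assume "P \<in> NPU g"
    then obtain i j where ij: "bcoeff g i j \<noteq> 0" "real i \<le> fst P" "real j \<le> snd P"
      using NPU_E by blast
    have r: "redge u v m xl xr (real i, real j)" using supp ij(1) .
    have ge: "u * real i + v * real j \<le> u * fst P + v * snd P"
      using ij assms(1,2) by (intro add_mono mult_left_mono) auto
    show "P \<in> {P. redge u v m xl xr P}"
    proof (cases "u * real i + v * real j < u * fst P + v * snd P")
      case True then show ?thesis using r unfolding redge_def by auto
    next
      case False
      then have "u * real i + v * real j = u * fst P + v * snd P" using ge by simp
      moreover have "u * real i \<le> u * fst P" "v * real j \<le> v * snd P"
        using ij assms(1,2) by auto
      ultimately have "u * real i = u * fst P" by linarith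
      then have "fst P = real i" using assms(1) by simp
      then show ?thesis using r ge False unfolding redge_def by auto
    qed
  qed
  moreover have "convex {P. redge u v m xl xr P}" by (rule convex_redge[OF assms(1,2)])
  ultimately have "newton_polygon g \<subseteq> {P. redge u v m xl xr P}"
    unfolding NP_eq by (rule hull_minimal)
  then show ?thesis using P by auto
qed


lemma convex_eq2:
  fixes t a b c :: real
  assumes "0 < t" "t < 1" "a \<ge> c" "b \<ge> c" "(1 - t) * a + t * b = c"
  shows "a = c \<and> b = c"
proof -
  have h1: "(1 - t) * (a - c) \<ge> 0" "t * (b - c) \<ge> 0" using assms by simp_all
  have "(1 - t) * (a - c) + t * (b - c) = 0" using assms(5) by (simp add: algebra_simps)
  then have "(1 - t) * (a - c) = 0" "t * (b - c) = 0" using h1 by linarith+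
  then show ?thesis using assms(1,2) by simp
qed

lemma convex_eq2':
  fixes t a b c :: real
  assumes "0 < t" "t < 1" "a \<le> c" "b \<le> c" "(1 - t) * a + t * b = c"
  shows "a = c \<and> b = c"
  using convex_eq2[OF assms(1,2), of "-c" "-a" "-b"] assms(3-5) by (simp add: algebra_simps)

lemma extreme_left:
  assumes uv: "u > 0" "v > 0"
    and supp: "\<And>i j. bcoeff g i j \<noteq> 0 \<Longrightarrow> redge u v m xl xr (real i, real j)"
    and L: "(xl, yl) \<in> newton_polygon g" "u * xl + v * yl = m"
  shows "(xl, yl) extreme_point_of newton_polygon g"
  unfolding extreme_point_of_def
proof (intro conjI ballI notI)
  show "(xl, yl) \<in> newton_polygon g" by (rule L(1))
  fix A B assume A: "A \<in> newton_polygon g" and B: "B \<in> newton_polygon g"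
    and seg: "(xl, yl) \<in> open_segment A B"
  then obtain t where t: "A \<noteq> B" "0 < t" "t < 1" "(xl, yl) = (1 - t) *\<^sub>R A + t *\<^sub>R B"
    unfolding in_segment by blast
  have rA: "redge u v m xl xr A" and rB: "redge u v m xl xr B"
    using NP_redge[OF uv supp] A B by blast+
  let ?w = "\<lambda>P::real\<times>real. u * fst P + v * snd P"
  have fx: "xl = (1 - t) * fst A + t * fst B" and fy: "yl = (1 - t) * snd A + t * snd B"
    using t(4) by (simp_all add: prod_eq_iff)
  have "?w (xl, yl) = u * ((1 - t) * fst A + t * fst B) + v * ((1 - t) * snd A + t * snd B)"
    using fx fy by simp
  also have "\<dots> = (1 - t) * ?w A + t * ?w B" by (simp add: algebra_simps)
  finally have "?w (xl, yl) = (1 - t) * ?w A + t * ?w B" .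
  then have "(1 - t) * ?w A + t * ?w B = m" using L(2) by simp
  moreover have "?w A \<ge> m" "?w B \<ge> m" using rA rB unfolding redge_def by auto
  ultimately have wA: "?w A = m" and wB: "?w B = m" using convex_eq2[OF t(2,3)] by blast+
  then have "xl \<le> fst A" "xl \<le> fst B" using rA rB unfolding redge_def by auto
  then have "fst A = xl \<and> fst B = xl" using convex_eq2[OF t(2,3)] fx by metis
  then have "u * fst A = u * fst B" by simp
  then have "v * snd A = v * snd B" using wA wB by linarith
  then have "snd A = snd B" using uv by simp
  then have "A = B" using \<open>fst A = xl \<and> fst B = xl\<close> by (simp add: prod_eq_iff)
  then show False using t(1) by simp
qed

lemma extreme_right:
  assumes uv: "u > 0" "v > 0"
    and supp: "\<And>i j. bcoeff g i j \<noteq> 0 \<Longrightarrow> redge u v m xl xr (real i, real j)"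
    and R: "(xr, yr) \<in> newton_polygon g" "u * xr + v * yr = m"
  shows "(xr, yr) extreme_point_of newton_polygon g"
  unfolding extreme_point_of_def
proof (intro conjI ballI notI)
  show "(xr, yr) \<in> newton_polygon g" by (rule R(1))
  fix A B assume A: "A \<in> newton_polygon g" and B: "B \<in> newton_polygon g"
    and seg: "(xr, yr) \<in> open_segment A B"
  then obtain t where t: "A \<noteq> B" "0 < t" "t < 1" "(xr, yr) = (1 - t) *\<^sub>R A + t *\<^sub>R B"
    unfolding in_segment by blast
  have rA: "redge u v m xl xr A" and rB: "redge u v m xl xr B"
    using NP_redge[OF uv supp] A B by blast+
  let ?w = "\<lambda>P::real\<times>real. u * fst P + v * snd P"
  have fx: "xr = (1 - t) * fst A + t * fst B" and fy: "yr = (1 - t) * snd A + t * snd B"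
    using t(4) by (simp_all add: prod_eq_iff)
  have "?w (xr, yr) = u * ((1 - t) * fst A + t * fst B) + v * ((1 - t) * snd A + t * snd B)"
    using fx fy by simp
  also have "\<dots> = (1 - t) * ?w A + t * ?w B" by (simp add: algebra_simps)
  finally have "?w (xr, yr) = (1 - t) * ?w A + t * ?w B" .
  then have "(1 - t) * ?w A + t * ?w B = m" using R(2) by simp
  moreover have "?w A \<ge> m" "?w B \<ge> m" using rA rB unfolding redge_def by auto
  ultimately have wA: "?w A = m" and wB: "?w B = m" using convex_eq2[OF t(2,3)] by blast+
  then have "fst A \<le> xr" "fst B \<le> xr" using rA rB unfolding redge_def by auto
  then have "fst A = xr \<and> fst B = xr" using convex_eq2'[OF t(2,3)] fx by metis
  then have "u * fst A = u * fst B" by simp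
  then have "v * snd A = v * snd B" using wA wB by linarith
  then have "snd A = snd B" using uv by simp
  then have "A = B" using \<open>fst A = xr \<and> fst B = xr\<close> by (simp add: prod_eq_iff)
  then show False using t(1) by simp
qed

lemma not_extreme_between:
  assumes A: "A \<in> newton_polygon g" and B: "B \<in> newton_polygon g" and AB: "fst A < fst B"
    and t: "0 < t" "t < 1" and X: "fst X = (1 - t) * fst A + t * fst B"
    "snd X \<ge> (1 - t) * snd A + t * snd B"
  shows "\<not> X extreme_point_of newton_polygon g"
proof
  assume ext: "X extreme_point_of newton_polygon g"
  define s where "s = (1 - t) *\<^sub>R A + t *\<^sub>R B"
  have sN: "s \<in> newton_polygon g" unfolding s_def NP_eq
    using A B t by (intro convexD[OF convex_convex_hull]) (auto simp: NP_eq)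
  have fs: "fst s = fst X" and ss: "snd s \<le> snd X" using X by (auto simp: s_def)
  show False
  proof (cases "snd s = snd X")
    case True
    then have "X = s" using fs by (simp add: prod_eq_iff)
    moreover have "s \<in> open_segment A B" unfolding in_segment s_def using AB t by auto
    ultimately show False using ext A B unfolding extreme_point_of_def by blast
  next
    case False
    define h where "h = snd X - snd s"
    have h: "h > 0" using False ss by (simp add: h_def)
    have s2: "s + (0, 2 * h) \<in> newton_polygon g" using NP_up[OF sN] h by simp
    have "X = (1 - 1/2) *\<^sub>R s + (1/2) *\<^sub>R (s + (0, 2 * h))"
      using fs by (simp add: prod_eq_iff h_def algebra_simps)
    moreover have "s \<noteq> s + (0, 2 * h)" using h by (simp add: prod_eq_iff)
    ultimately have "X \<in> open_segment s (s + (0, 2 * h))"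
      unfolding in_segment by (intro conjI exI[of _ "1/2"]) simp_all
    then show False using ext sN s2 unfolding extreme_point_of_def by blast
  qed
qed

lemma next_vertex_edge:
  assumes uv: "u > 0" "v > 0"
    and supp: "\<And>i j. bcoeff g i j \<noteq> 0 \<Longrightarrow> redge u v m xl xr (real i, real j)"
    and L: "(xl, yl) \<in> newton_polygon g" "u * xl + v * yl = m"
    and R: "(xr, yr) \<in> newton_polygon g" "u * xr + v * yr = m"
    and lr: "xl < xr"
  shows "next_vertex g (xl, yl) (xr, yr)"
  unfolding next_vertex_def vertices_def mem_Collect_eq
proof (intro conjI ballI)
  show "(xl, yl) extreme_point_of newton_polygon g" by (rule extreme_left[OF uv supp L])
  show "(xr, yr) extreme_point_of newton_polygon g" by (rule extreme_right[OF uv supp R])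
  show "fst (xl, yl) < fst (xr, yr)" using lr by simp
  fix W assume W: "W \<in> {v. v extreme_point_of newton_polygon g}"
  show "\<not> (fst (xl, yl) < fst W \<and> fst W < fst (xr, yr))"
  proof
    assume bw: "fst (xl, yl) < fst W \<and> fst W < fst (xr, yr)"
    define t where "t = (fst W - xl) / (xr - xl)"
    have t: "0 < t" "t < 1" using bw lr by (auto simp: t_def divide_simps)
    have e: "t * (xr - xl) = fst W - xl" using lr by (simp add: t_def)
    have "(1 - t) * xl + t * xr = xl + t * (xr - xl)" by (simp add: algebra_simps)
    then have fW: "fst W = (1 - t) * xl + t * xr" using e by linarith
    have WN: "W \<in> newton_polygon g" using W extreme_point_of_def by auto
    have "redge u v m xl xr W" using NP_redge[OF uv supp WN] .
    then have wW: "u * fst W + v * snd W \<ge> m" unfolding redge_def by auto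
    have "u * fst W + v * ((1 - t) * yl + t * yr) = (1 - t) * (u * xl + v * yl) + t * (u * xr + v * yr)"
      by (subst fW) (simp add: algebra_simps)
    also have "\<dots> = m" using L(2) R(2) by (simp add: algebra_simps)
    finally have "v * ((1 - t) * yl + t * yr) \<le> v * snd W" using wW by linarith
    then have "(1 - t) * yl + t * yr \<le> snd W" using uv by simp
    then have "\<not> W extreme_point_of newton_polygon g"
      using not_extreme_between[OF L(1) R(1) _ t, of W] lr fW by simp
    then show False using W by simp
  qed
qed


lemma not_extreme_between_w:
  assumes uv: "u > 0" "v > 0"
    and A: "A \<in> newton_polygon g" and B: "B \<in> newton_polygon g"
    and x: "fst A < fst X" "fst X < fst B"
    and wA: "u * fst A + v * snd A \<le> u * fst X + v * snd X"
    and wB: "u * fst B + v * snd B \<le> u * fst X + v * snd X"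
  shows "\<not> X extreme_point_of newton_polygon g"
proof -
  define t where "t = (fst X - fst A) / (fst B - fst A)"
  have t: "0 < t" "t < 1" using x by (auto simp: t_def divide_simps)
  have e: "t * (fst B - fst A) = fst X - fst A" using x by (simp add: t_def)
  have "(1 - t) * fst A + t * fst B = fst A + t * (fst B - fst A)" by (simp add: algebra_simps)
  then have fX: "fst X = (1 - t) * fst A + t * fst B" using e by linarith
  have "u * fst X + v * ((1 - t) * snd A + t * snd B)
      = (1 - t) * (u * fst A + v * snd A) + t * (u * fst B + v * snd B)"
    by (subst fX) (simp add: algebra_simps)
  also have "\<dots> \<le> (1 - t) * (u * fst X + v * snd X) + t * (u * fst X + v * snd X)"
  proof -
    have "(1 - t) * (u * fst A + v * snd A) \<le> (1 - t) * (u * fst X + v * snd X)"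
      using t wA by (intro mult_left_mono) auto
    moreover have "t * (u * fst B + v * snd B) \<le> t * (u * fst X + v * snd X)"
      using t wB by (intro mult_left_mono) auto
    ultimately show ?thesis by linarith
  qed
  also have "\<dots> = u * fst X + v * snd X" by (simp add: algebra_simps)
  finally have "v * ((1 - t) * snd A + t * snd B) \<le> v * snd X" by linarith
  then have "(1 - t) * snd A + t * snd B \<le> snd X" using uv by simp
  then show ?thesis using not_extreme_between[OF A B _ t fX] x by linarith
qed

lemma lexmin_extreme:
  fixes u v :: nat
  assumes uv: "u > 0" "v > 0" and nz: "bcoeff g i1 j1 \<noteq> 0"
  shows "\<exists>i0 j0. bcoeff g i0 j0 \<noteq> 0 \<and> (\<forall>i j. bcoeff g i j \<noteq> 0 \<longrightarrow> u * i0 + v * j0 \<le> u * i + v * j)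
     \<and> (\<forall>i j. bcoeff g i j \<noteq> 0 \<longrightarrow> u * i + v * j = u * i0 + v * j0 \<longrightarrow> i0 \<le> i)
     \<and> (real i0, real j0) extreme_point_of newton_polygon g"
proof -
  obtain P where P: "bcoeff g (fst P) (snd P) \<noteq> 0"
      "\<forall>Q. bcoeff g (fst Q) (snd Q) \<noteq> 0 \<longrightarrow> u * fst P + v * snd P \<le> u * fst Q + v * snd Q"
    using ex_has_least_nat[of "\<lambda>P. bcoeff g (fst P) (snd P) \<noteq> 0" "(i1, j1)"
        "\<lambda>P. u * fst P + v * snd P"] nz by auto
  define m0 where "m0 = u * fst P + v * snd P"
  obtain P0 where P0: "bcoeff g (fst P0) (snd P0) \<noteq> 0 \<and> u * fst P0 + v * snd P0 = m0"
      "\<forall>Q. bcoeff g (fst Q) (snd Q) \<noteq> 0 \<and> u * fst Q + v * snd Q = m0 \<longrightarrow> fst P0 \<le> fst Q"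
    using ex_has_least_nat[of "\<lambda>Q. bcoeff g (fst Q) (snd Q) \<noteq> 0 \<and> u * fst Q + v * snd Q = m0" P fst]
      P(1) m0_def by blast
  define i0 j0 where "i0 = fst P0" and "j0 = snd P0"
  have min: "\<forall>i j. bcoeff g i j \<noteq> 0 \<longrightarrow> u * i0 + v * j0 \<le> u * i + v * j"
    using P(2) P0(1) m0_def i0_def j0_def by (metis fst_conv snd_conv)
  have lex: "\<forall>i j. bcoeff g i j \<noteq> 0 \<longrightarrow> u * i + v * j = u * i0 + v * j0 \<longrightarrow> i0 \<le> i"
    using P0 i0_def j0_def by (metis fst_conv snd_conv)
  have supp: "redge (real u) (real v) (real m0) (real i0) (real m0 / real u) (real i, real j)"
    if "bcoeff g i j \<noteq> 0" for i j
  proof -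
    have ge: "m0 \<le> u * i + v * j" using min that P0(1) i0_def j0_def by metis
    show ?thesis
    proof (cases "m0 = u * i + v * j")
      case True
      then have "i0 \<le> i" using lex that P0(1) i0_def j0_def by metis
      moreover have "u * i \<le> m0" using True by simp
      then have "real u * real i \<le> real m0" by (metis of_nat_le_iff of_nat_mult)
      then have "real i \<le> real m0 / real u" using uv by (simp add: field_simps)
      ultimately show ?thesis using True unfolding redge_def by simp
    next
      case False
      then have "m0 < u * i + v * j" using ge by simp
      then have "real m0 < real u * real i + real v * real j" by (metis of_nat_add of_nat_mult of_nat_less_iff)
      then show ?thesis unfolding redge_def by simp
    qed
  qed
  have ext: "(real i0, real j0) extreme_point_of newton_polygon g"
  proof (rule extreme_left[where m = "real m0"])
    show "real u > 0" "real v > 0" using uv by simp_all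
    show "(real i0, real j0) \<in> newton_polygon g"
      using supp_in_NP P0(1) i0_def j0_def by blast
    show "real u * real i0 + real v * real j0 = real m0"
      using P0(1) i0_def j0_def by (metis of_nat_add of_nat_mult)
  qed (rule supp)
  show ?thesis using ext min lex P0(1) i0_def j0_def by blast
qed

lemma lexmax_extreme:
  fixes u v :: nat
  assumes uv: "u > 0" "v > 0" and nz: "bcoeff g i1 j1 \<noteq> 0"
  shows "\<exists>i0 j0. bcoeff g i0 j0 \<noteq> 0 \<and> (\<forall>i j. bcoeff g i j \<noteq> 0 \<longrightarrow> u * i0 + v * j0 \<le> u * i + v * j)
     \<and> (\<forall>i j. bcoeff g i j \<noteq> 0 \<longrightarrow> u * i + v * j = u * i0 + v * j0 \<longrightarrow> i \<le> i0)
     \<and> (real i0, real j0) extreme_point_of newton_polygon g"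
proof -
  obtain P where P: "bcoeff g (fst P) (snd P) \<noteq> 0"
      "\<forall>Q. bcoeff g (fst Q) (snd Q) \<noteq> 0 \<longrightarrow> u * fst P + v * snd P \<le> u * fst Q + v * snd Q"
    using ex_has_least_nat[of "\<lambda>P. bcoeff g (fst P) (snd P) \<noteq> 0" "(i1, j1)"
        "\<lambda>P. u * fst P + v * snd P"] nz by auto
  define m0 where "m0 = u * fst P + v * snd P"
  have bnd: "\<forall>Q. bcoeff g (fst Q) (snd Q) \<noteq> 0 \<and> u * fst Q + v * snd Q = m0 \<longrightarrow> fst Q < Suc m0"
  proof (intro allI impI)
    fix Q assume "bcoeff g (fst Q) (snd Q) \<noteq> 0 \<and> u * fst Q + v * snd Q = m0"
    then have "u * fst Q \<le> m0" by auto
    moreover have "1 * fst Q \<le> u * fst Q" using uv by (intro mult_le_mono1) simp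
    ultimately show "fst Q < Suc m0" by linarith
  qed
  obtain P0 where P0: "bcoeff g (fst P0) (snd P0) \<noteq> 0 \<and> u * fst P0 + v * snd P0 = m0"
      "\<forall>Q. bcoeff g (fst Q) (snd Q) \<noteq> 0 \<and> u * fst Q + v * snd Q = m0 \<longrightarrow> fst Q \<le> fst P0"
    using ex_has_greatest_nat[of "\<lambda>Q. bcoeff g (fst Q) (snd Q) \<noteq> 0 \<and> u * fst Q + v * snd Q = m0" P fst "Suc m0"]
      P(1) m0_def bnd by blast
  define i0 j0 where "i0 = fst P0" and "j0 = snd P0"
  have min: "\<forall>i j. bcoeff g i j \<noteq> 0 \<longrightarrow> u * i0 + v * j0 \<le> u * i + v * j"
    using P(2) P0(1) m0_def i0_def j0_def by (metis fst_conv snd_conv)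
  have lex: "\<forall>i j. bcoeff g i j \<noteq> 0 \<longrightarrow> u * i + v * j = u * i0 + v * j0 \<longrightarrow> i \<le> i0"
    using P0 i0_def j0_def by (metis fst_conv snd_conv)
  have supp: "redge (real u) (real v) (real m0) 0 (real i0) (real i, real j)"
    if "bcoeff g i j \<noteq> 0" for i j
  proof -
    have ge: "m0 \<le> u * i + v * j" using min that P0(1) i0_def j0_def by metis
    show ?thesis
    proof (cases "m0 = u * i + v * j")
      case True
      then have "i \<le> i0" using lex that P0(1) i0_def j0_def by metis
      then show ?thesis using True unfolding redge_def by simp
    next
      case False
      then have "m0 < u * i + v * j" using ge by simp
      then have "real m0 < real u * real i + real v * real j" by (metis of_nat_add of_nat_mult of_nat_less_iff)
      then show ?thesis unfolding redge_def by simp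
    qed
  qed
  have ext: "(real i0, real j0) extreme_point_of newton_polygon g"
  proof (rule extreme_right[where m = "real m0"])
    show "real u > 0" "real v > 0" using uv by simp_all
    show "(real i0, real j0) \<in> newton_polygon g"
      using supp_in_NP P0(1) i0_def j0_def by blast
    show "real u * real i0 + real v * real j0 = real m0"
      using P0(1) i0_def j0_def by (metis of_nat_add of_nat_mult)
  qed (rule supp)
  show ?thesis using ext min lex P0(1) i0_def j0_def by blast
qed


lemma cast_le: "(a::nat) * b + c * d \<le> a * b' + c * d' \<Longrightarrow>
    real a * real b + real c * real d \<le> real a * real b' + real c * real d'"
  by (metis of_nat_add of_nat_mult of_nat_le_iff)

lemma edge_from_vertices:
  fixes nv mv :: "nat \<Rightarrow> nat" and s e :: nat
  assumes verts: "vertices q = {(real (nv i), real (mv i)) | i. i \<in> {1..s}}"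
    and nv_mono: "\<forall>i\<in>{1..s}. \<forall>j\<in>{1..s}. i < j \<longrightarrow> nv i < nv j"
    and mv_mono: "\<forall>i\<in>{1..s}. \<forall>j\<in>{1..s}. i < j \<longrightarrow> mv i > mv j"
    and e: "1 \<le> e" "e + 1 \<le> s"
  shows "\<forall>i j. bcoeff q i j \<noteq> 0 \<longrightarrow>
     (mv e - mv (e+1)) * nv e + (nv (e+1) - nv e) * mv e < (mv e - mv (e+1)) * i + (nv (e+1) - nv e) * j
   \<or> ((mv e - mv (e+1)) * i + (nv (e+1) - nv e) * j = (mv e - mv (e+1)) * nv e + (nv (e+1) - nv e) * mv e
      \<and> nv e \<le> i \<and> i \<le> nv (e+1))"
proof -
  define uE where "uE = mv e - mv (e+1)"
  define vE where "vE = nv (e+1) - nv e"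
  define cE where "cE = uE * nv e + vE * mv e"
  have e1: "e \<in> {1..s}" "e+1 \<in> {1..s}" using e by auto
  have lt: "nv e < nv (e+1)" "mv (e+1) < mv e" using nv_mono mv_mono e1 by auto
  have uv: "uE > 0" "vE > 0" using lt by (simp_all add: uE_def vE_def)
  have c2: "uE * nv (e+1) + vE * mv (e+1) = cE"
  proof -
    have "int (uE * nv (e+1) + vE * mv (e+1)) = int cE"
      using lt unfolding cE_def uE_def vE_def by (simp add: of_nat_diff algebra_simps)
    then show ?thesis by (metis of_nat_eq_iff)
  qed
  have vert: "(real (nv t), real (mv t)) extreme_point_of newton_polygon q" if "t \<in> {1..s}" for t
  proof -
    have "(real (nv t), real (mv t)) \<in> vertices q" using verts that by blast
    then show ?thesis unfolding vertices_def by simp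
  qed
  have vertN: "(real (nv t), real (mv t)) \<in> newton_polygon q" if "t \<in> {1..s}" for t
    using vert[OF that] unfolding extreme_point_of_def by simp
  have isv: "\<exists>t\<in>{1..s}. i = nv t \<and> j = mv t"
    if "(real i, real j) extreme_point_of newton_polygon q" for i j
  proof -
    have "(real i, real j) \<in> vertices q" unfolding vertices_def using that by simp
    then obtain t where "t \<in> {1..s}" "real i = real (nv t)" "real j = real (mv t)"
      using verts by auto
    then show ?thesis by auto
  qed
  have ruv: "real uE > 0" "real vE > 0" using uv by simp_all
  have a: "cE < uE * nv t + vE * mv t" if t: "t \<in> {1..s}" "t \<noteq> e" "t \<noteq> e+1" for t
  proof (rule ccontr)
    assume "\<not> cE < uE * nv t + vE * mv t"
    then have le: "uE * nv t + vE * mv t \<le> cE" by simp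
    show False
    proof (cases "t < e")
      case True
      then have "nv t < nv e" using nv_mono t e1 by auto
      have "\<not> (real (nv e), real (mv e)) extreme_point_of newton_polygon q"
      proof (rule not_extreme_between_w[OF ruv vertN[OF t(1)] vertN[OF e1(2)]])
        show "fst (real (nv t), real (mv t)) < fst (real (nv e), real (mv e))"
          using \<open>nv t < nv e\<close> by simp
        show "fst (real (nv e), real (mv e)) < fst (real (nv (e+1)), real (mv (e+1)))"
          using lt by simp
        show "real uE * fst (real (nv t), real (mv t)) + real vE * snd (real (nv t), real (mv t))
          \<le> real uE * fst (real (nv e), real (mv e)) + real vE * snd (real (nv e), real (mv e))"
          using cast_le[of uE "nv t" vE "mv t" "nv e" "mv e"] le cE_def by simp
        show "real uE * fst (real (nv (e+1)), real (mv (e+1))) + real vE * snd (real (nv (e+1)), real (mv (e+1)))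
          \<le> real uE * fst (real (nv e), real (mv e)) + real vE * snd (real (nv e), real (mv e))"
          using cast_le[of uE "nv (e+1)" vE "mv (e+1)" "nv e" "mv e"] c2 cE_def by simp
      qed
      then show False using vert[OF e1(1)] by simp
    next
      case False
      then have "t > e+1" using t by simp
      then have "nv (e+1) < nv t" using nv_mono t e1 by auto
      have "\<not> (real (nv (e+1)), real (mv (e+1))) extreme_point_of newton_polygon q"
      proof (rule not_extreme_between_w[OF ruv vertN[OF e1(1)] vertN[OF t(1)]])
        show "fst (real (nv e), real (mv e)) < fst (real (nv (e+1)), real (mv (e+1)))"
          using lt by simp
        show "fst (real (nv (e+1)), real (mv (e+1))) < fst (real (nv t), real (mv t))"
          using \<open>nv (e+1) < nv t\<close> by simp
        show "real uE * fst (real (nv e), real (mv e)) + real vE * snd (real (nv e), real (mv e))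
          \<le> real uE * fst (real (nv (e+1)), real (mv (e+1))) + real vE * snd (real (nv (e+1)), real (mv (e+1)))"
          using cast_le[of uE "nv e" vE "mv e" "nv (e+1)" "mv (e+1)"] c2 cE_def by simp
        show "real uE * fst (real (nv t), real (mv t)) + real vE * snd (real (nv t), real (mv t))
          \<le> real uE * fst (real (nv (e+1)), real (mv (e+1))) + real vE * snd (real (nv (e+1)), real (mv (e+1)))"
          using cast_le[of uE "nv t" vE "mv t" "nv (e+1)" "mv (e+1)"] le c2 by simp
      qed
      then show False using vert[OF e1(2)] by simp
    qed
  qed
  have main: "cE < uE * i + vE * j \<or> (uE * i + vE * j = cE \<and> nv e \<le> i \<and> i \<le> nv (e+1))"
    if nz: "bcoeff q i j \<noteq> 0" for i j
  proof (rule ccontr)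
    assume viol: "\<not> ?thesis"
    obtain i0 j0 where L: "bcoeff q i0 j0 \<noteq> 0" "\<forall>i j. bcoeff q i j \<noteq> 0 \<longrightarrow> uE * i0 + vE * j0 \<le> uE * i + vE * j"
       "\<forall>i j. bcoeff q i j \<noteq> 0 \<longrightarrow> uE * i + vE * j = uE * i0 + vE * j0 \<longrightarrow> i0 \<le> i"
       "(real i0, real j0) extreme_point_of newton_polygon q"
      using lexmin_extreme[OF uv nz] by blast
    obtain t0 where t0: "t0 \<in> {1..s}" "i0 = nv t0" "j0 = mv t0" using isv[OF L(4)] by blast
    have le0: "uE * i0 + vE * j0 \<le> uE * i + vE * j" using L(2) nz by blast
    have "uE * i + vE * j \<le> cE" using viol by linarith
    then have "t0 = e \<or> t0 = e+1" using a[OF t0(1)] le0 t0 by fastforce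
    then have w0: "uE * i0 + vE * j0 = cE" and i0ge: "nv e \<le> i0"
      using t0 c2 cE_def lt by auto
    have wij: "uE * i + vE * j = cE" using le0 w0 \<open>uE * i + vE * j \<le> cE\<close> by simp
    show False
    proof (cases "i < nv e")
      case True
      have "i0 \<le> i" using L(3) nz wij w0 by simp
      then show False using True i0ge by simp
    next
      case False
      then have gt: "i > nv (e+1)" using viol wij by auto
      obtain i1 j1 where R: "bcoeff q i1 j1 \<noteq> 0" "\<forall>i j. bcoeff q i j \<noteq> 0 \<longrightarrow> uE * i1 + vE * j1 \<le> uE * i + vE * j"
         "\<forall>i j. bcoeff q i j \<noteq> 0 \<longrightarrow> uE * i + vE * j = uE * i1 + vE * j1 \<longrightarrow> i \<le> i1"
         "(real i1, real j1) extreme_point_of newton_polygon q"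
        using lexmax_extreme[OF uv nz] by blast
      obtain t1 where t1: "t1 \<in> {1..s}" "i1 = nv t1" "j1 = mv t1" using isv[OF R(4)] by blast
      have le1: "uE * i1 + vE * j1 \<le> uE * i + vE * j" using R(2) nz by blast
      then have "t1 = e \<or> t1 = e+1" using a[OF t1(1)] t1 wij by fastforce
      then have w1: "uE * i1 + vE * j1 = cE" and i1le: "i1 \<le> nv (e+1)"
        using t1 c2 cE_def lt by auto
      have "i \<le> i1" using R(3) nz wij w1 by simp
      then show False using gt i1le by simp
    qed
  qed
  show ?thesis using main unfolding uE_def vE_def cE_def by blast
qed


lemma bcoeff_sum: "bcoeff (sum f A) a b = (\<Sum>x\<in>A. bcoeff (f x) a b)"
  unfolding bcoeff_def by (simp add: fps_sum_nth)

lemma bcoeff_cmult: "bcoeff (fps_const (fps_const c) * F) a b = c * bcoeff F a b"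
  unfolding bcoeff_def by simp

lemma bcoeff_bsubst:
  "bcoeff (bsubst q P G) a b = (\<Sum>i\<le>a+b. \<Sum>j\<le>a+b-i. bcoeff q i j * bcoeff (fps_const P ^ i * G ^ j) a b)"
proof -
  have "bcoeff (bsubst q P G) a b = bcoeff (\<Sum>i\<le>a+b. \<Sum>j\<le>a+b-i.
        fps_const (fps_const (bcoeff q i j)) * fps_const P ^ i * G ^ j) a b"
    unfolding bsubst_def by (simp add: bcoeff_def)
  also have "\<dots> = (\<Sum>i\<le>a+b. \<Sum>j\<le>a+b-i. bcoeff q i j * bcoeff (fps_const P ^ i * G ^ j) a b)"
    by (simp only: bcoeff_sum mult.assoc bcoeff_cmult)
  finally show ?thesis .
qed

lemma bcoeff_const: "bcoeff (fps_const R) a b = (if b = 0 then fps_nth R a else 0)"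
  unfolding bcoeff_def by (cases b) auto

lemma edge_const:
  assumes "R \<noteq> 0" "subdegree R = e" "u > 0"
  shows "edge u v (fps_const R) (u * e) e e \<and> bcoeff (fps_const R) e 0 \<noteq> 0"
proof
  show "bcoeff (fps_const R) e 0 \<noteq> 0" using assms nth_subdegree_nonzero[of R] by (simp add: bcoeff_const)
  show "edge u v (fps_const R) (u * e) e e"
    unfolding edge_def
  proof (intro allI impI)
    fix a b assume "bcoeff (fps_const R) a b \<noteq> 0"
    then have b: "b = 0" and "fps_nth R a \<noteq> 0" by (auto simp: bcoeff_const split: if_splits)
    then have "e \<le> a" using assms(2) by (metis leI nth_less_subdegree_zero)
    show "u * e < u * a + v * b \<or> (u * a + v * b = u * e \<and> e \<le> a \<and> a \<le> e)"
    proof (cases "e = a")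
      case True then show ?thesis using b by simp
    next
      case False then have "e < a" using \<open>e \<le> a\<close> by simp
      then show ?thesis using assms(3) b by simp
    qed
  qed
qed


lemma edge_Ppow:
  assumes "P \<noteq> 0" "subdegree P = D0" "u > 0"
  shows "edge u v (fps_const P ^ i) (u * (i * D0)) (i * D0) (i * D0) \<and> bcoeff (fps_const P ^ i) (i * D0) 0 \<noteq> 0"
proof -
  have "P ^ i \<noteq> 0" using assms(1) by simp
  moreover have "subdegree (P ^ i) = i * D0" using assms(2) by simp
  ultimately show ?thesis using edge_const[of "P ^ i" "i * D0" u v] assms(3) by (simp add: fps_const_power)
qed

lemma step:
  fixes u v D0 c L R yL yR g d iR jR :: nat
  assumes uv: "u > 0" "v > 0"
   and P: "P \<noteq> 0" "subdegree P = D0" "D0 \<ge> 1"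
   and G: "edge u v G c L R" "bcoeff G L yL \<noteq> 0" "bcoeff G R yR \<noteq> 0"
          "u * L + v * yL = c" "u * R + v * yR = c" "L + yL \<ge> 1" "R + yR \<ge> 1"
   and q1: "bcoeff q g d \<noteq> 0" "bcoeff q iR jR \<noteq> 0"
   and wR: "u * (iR * D0) + jR * c = u * (g * D0) + d * c"
   and hmin: "\<And>i j. bcoeff q i j \<noteq> 0 \<Longrightarrow> u * (g * D0) + d * c \<le> u * (i * D0) + j * c"
   and hL: "\<And>i j. bcoeff q i j \<noteq> 0 \<Longrightarrow> u * (i * D0) + j * c = u * (g * D0) + d * c \<Longrightarrow>
             (i, j) \<noteq> (g, d) \<Longrightarrow> g * D0 + d * L < i * D0 + j * L"
   and hR: "\<And>i j. bcoeff q i j \<noteq> 0 \<Longrightarrow> u * (i * D0) + j * c = u * (g * D0) + d * c \<Longrightarrow>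
             (i, j) \<noteq> (iR, jR) \<Longrightarrow> i * D0 + j * R < iR * D0 + jR * R"
  shows "edge u v (bsubst q P G) (u * (g * D0) + d * c) (g * D0 + d * L) (iR * D0 + jR * R)
       \<and> bcoeff (bsubst q P G) (g * D0 + d * L) (d * yL) \<noteq> 0
       \<and> bcoeff (bsubst q P G) (iR * D0 + jR * R) (jR * yR) \<noteq> 0"
proof -
  define M where "M = u * (g * D0) + d * c"
  define T where "T = (\<lambda>i j. fps_const P ^ i * G ^ j)"
  have PE: "edge u v (fps_const P ^ i) (u * (i * D0)) (i * D0) (i * D0)"
    and PC: "bcoeff (fps_const P ^ i) (i * D0) 0 \<noteq> 0" for i
    using edge_Ppow[OF P(1,2) uv(1)] by blast+
  have GP: "edge u v (G^j) (j * c) (j * L) (j * R) \<and> bcoeff (G^j) (j * L) (j * yL) = bcoeff G L yL ^ j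
       \<and> bcoeff (G^j) (j * R) (j * yR) = bcoeff G R yR ^ j" for j
    by (rule edge_power[OF G(1) uv(2) G(4,5)])
  have TE: "edge u v (T i j) (u * (i * D0) + j * c) (i * D0 + j * L) (i * D0 + j * R)" for i j
    unfolding T_def using edge_mult[OF PE GP[THEN conjunct1]] .
  have ePL: "u * (i * D0) + v * 0 = u * (i * D0)" for i by simp
  have eGL: "u * (j * L) + v * (j * yL) = j * c" and eGR: "u * (j * R) + v * (j * yR) = j * c" for j
    using G(4,5) by (metis add_mult_distrib2 mult.left_commute)+
  have TL: "bcoeff (T i j) (i * D0 + j * L) (j * yL) \<noteq> 0" for i j
  proof -
    have "bcoeff (T i j) (i * D0 + j * L) (0 + j * yL) = bcoeff (fps_const P ^ i) (i * D0) 0 * bcoeff (G^j) (j * L) (j * yL)"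
      unfolding T_def by (rule edge_mult_left[OF PE GP[THEN conjunct1] uv(2) ePL eGL])
    then show ?thesis using PC GP G(2) by simp
  qed
  have TR: "bcoeff (T i j) (i * D0 + j * R) (j * yR) \<noteq> 0" for i j
  proof -
    have "bcoeff (T i j) (i * D0 + j * R) (0 + j * yR) = bcoeff (fps_const P ^ i) (i * D0) 0 * bcoeff (G^j) (j * R) (j * yR)"
      unfolding T_def by (rule edge_mult_right[OF PE GP[THEN conjunct1] uv(2) ePL eGR])
    then show ?thesis using PC GP G(3) by simp
  qed
  have coef: "bcoeff (bsubst q P G) a b = (\<Sum>i\<le>a+b. \<Sum>j\<le>a+b-i. bcoeff q i j * bcoeff (T i j) a b)" for a b
    unfolding T_def by (rule bcoeff_bsubst)
  have rng: "g * D0 + d * L \<le> i * D0 + j * L \<and> i * D0 + j * R \<le> iR * D0 + jR * R"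
    if "bcoeff q i j \<noteq> 0" "u * (i * D0) + j * c = M" for i j
  proof
    show "g * D0 + d * L \<le> i * D0 + j * L"
      using hL[OF that(1) that(2)[unfolded M_def]] by (cases "(i, j) = (g, d)") auto
    show "i * D0 + j * R \<le> iR * D0 + jR * R"
      using hR[OF that(1) that(2)[unfolded M_def]] by (cases "(i, j) = (iR, jR)") auto
  qed
  have E: "edge u v (bsubst q P G) M (g * D0 + d * L) (iR * D0 + jR * R)"
    unfolding edge_def
  proof (intro allI impI)
    fix a b assume "bcoeff (bsubst q P G) a b \<noteq> 0"
    then obtain i j where ij: "bcoeff q i j * bcoeff (T i j) a b \<noteq> 0"
      unfolding coef by (meson sum.not_neutral_contains_not_neutral)
    then have qi: "bcoeff q i j \<noteq> 0" and ti: "bcoeff (T i j) a b \<noteq> 0" by auto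
    have te: "u * (i * D0) + j * c < u * a + v * b \<or> (u * a + v * b = u * (i * D0) + j * c
              \<and> i * D0 + j * L \<le> a \<and> a \<le> i * D0 + j * R)"
      using TE[of i j] ti unfolding edge_def by blast
    have mi: "M \<le> u * (i * D0) + j * c" using hmin[OF qi] M_def by simp
    show "M < u * a + v * b \<or> (u * a + v * b = M \<and> g * D0 + d * L \<le> a \<and> a \<le> iR * D0 + jR * R)"
    proof (cases "u * (i * D0) + j * c = M")
      case True
      then show ?thesis using te rng[OF qi True] by auto
    next
      case False
      then show ?thesis using te mi by auto
    qed
  qed
  have wL: "u * (g * D0 + d * L) + v * (d * yL) = M"
    using eGL[of d] unfolding M_def by (simp add: algebra_simps)
  have wRR: "u * (iR * D0 + jR * R) + v * (jR * yR) = M"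
    using eGR[of jR] wR unfolding M_def by (simp add: algebra_simps)
  have Lc: "bcoeff (bsubst q P G) (g * D0 + d * L) (d * yL) \<noteq> 0"
  proof -
    let ?a = "g * D0 + d * L" and ?b = "d * yL"
    have zero: "bcoeff q i j * bcoeff (T i j) ?a ?b = 0" if "(i, j) \<noteq> (g, d)" for i j
    proof (rule ccontr)
      assume "bcoeff q i j * bcoeff (T i j) ?a ?b \<noteq> 0"
      then have qi: "bcoeff q i j \<noteq> 0" and ti: "bcoeff (T i j) ?a ?b \<noteq> 0" by auto
      have te: "u * (i * D0) + j * c < u * ?a + v * ?b \<or> (u * ?a + v * ?b = u * (i * D0) + j * c
              \<and> i * D0 + j * L \<le> ?a \<and> ?a \<le> i * D0 + j * R)"
        using TE[of i j] ti unfolding edge_def by blast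
      have mi: "M \<le> u * (i * D0) + j * c" using hmin[OF qi] M_def by simp
      then have eq: "u * (i * D0) + j * c = M" and le: "i * D0 + j * L \<le> ?a" using te wL by auto
      show False using hL[OF qi eq[unfolded M_def] that] le by simp
    qed
    have gd: "g \<le> ?a + ?b" "d \<le> ?a + ?b - g"
    proof -
      have "g \<le> g * D0" using P(3) by simp
      moreover have "d \<le> d * L + d * yL" using G(6) by (metis add_mult_distrib2 mult.right_neutral mult_le_mono2)
      ultimately show "g \<le> ?a + ?b" "d \<le> ?a + ?b - g" by linarith+
    qed
    have "bcoeff (bsubst q P G) ?a ?b = bcoeff q g d * bcoeff (T g d) ?a ?b"
      unfolding coef
    proof (rule trans[OF sum_single[where a = g]])
      show "(\<Sum>j\<le>?a + ?b - g. bcoeff q g j * bcoeff (T g j) ?a ?b) = bcoeff q g d * bcoeff (T g d) ?a ?b"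
        by (rule sum_single) (use gd zero in auto)
    qed (use gd zero in \<open>auto intro!: sum.neutral\<close>)
    also have "\<dots> \<noteq> 0" using q1(1) TL[of g d] by simp
    finally show ?thesis .
  qed
  have Rc: "bcoeff (bsubst q P G) (iR * D0 + jR * R) (jR * yR) \<noteq> 0"
  proof -
    let ?a = "iR * D0 + jR * R" and ?b = "jR * yR"
    have zero: "bcoeff q i j * bcoeff (T i j) ?a ?b = 0" if "(i, j) \<noteq> (iR, jR)" for i j
    proof (rule ccontr)
      assume "bcoeff q i j * bcoeff (T i j) ?a ?b \<noteq> 0"
      then have qi: "bcoeff q i j \<noteq> 0" and ti: "bcoeff (T i j) ?a ?b \<noteq> 0" by auto
      have te: "u * (i * D0) + j * c < u * ?a + v * ?b \<or> (u * ?a + v * ?b = u * (i * D0) + j * c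
              \<and> i * D0 + j * L \<le> ?a \<and> ?a \<le> i * D0 + j * R)"
        using TE[of i j] ti unfolding edge_def by blast
      have mi: "M \<le> u * (i * D0) + j * c" using hmin[OF qi] M_def by simp
      then have eq: "u * (i * D0) + j * c = M" and le: "?a \<le> i * D0 + j * R" using te wRR by auto
      show False using hR[OF qi eq[unfolded M_def] that] le by simp
    qed
    have gd: "iR \<le> ?a + ?b" "jR \<le> ?a + ?b - iR"
    proof -
      have "iR \<le> iR * D0" using P(3) by simp
      moreover have "jR \<le> jR * R + jR * yR" using G(7) by (metis add_mult_distrib2 mult.right_neutral mult_le_mono2)
      ultimately show "iR \<le> ?a + ?b" "jR \<le> ?a + ?b - iR" by linarith+
    qed
    have "bcoeff (bsubst q P G) ?a ?b = bcoeff q iR jR * bcoeff (T iR jR) ?a ?b"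
      unfolding coef
    proof (rule trans[OF sum_single[where a = iR]])
      show "(\<Sum>j\<le>?a + ?b - iR. bcoeff q iR j * bcoeff (T iR j) ?a ?b) = bcoeff q iR jR * bcoeff (T iR jR) ?a ?b"
        by (rule sum_single) (use gd zero in auto)
    qed (use gd zero in \<open>auto intro!: sum.neutral\<close>)
    also have "\<dots> \<noteq> 0" using q1(2) TR[of iR jR] by simp
    finally show ?thesis .
  qed
  show ?thesis using E Lc Rc M_def by simp
qed


lemma case_i_arith:
  fixes a b a' b' D0 c x y :: int
  assumes pos: "a > 0" "b > 0" "a' > 0" "b' > 0" "D0 > 0" "c > 0"
    and F1: "a' * c > a * b' * D0" and F2: "b * D0 > c"
    and e1: "a * x + b * y \<ge> 0" and e2: "a' * x + b' * y \<ge> 0"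
  shows "a * D0 * x + c * y \<ge> 0 \<and> (a * D0 * x + c * y = 0 \<longrightarrow> x = 0 \<and> y = 0)"
proof (cases "x < 0")
  case True
  have "b' * y > 0" using e2 True pos by (smt (verit) mult_pos_neg)
  then have y: "y > 0" using pos by (simp add: zero_less_mult_iff)
  have "a * D0 * (a' * x) \<ge> a * D0 * (- b' * y)"
    using e2 pos by (intro mult_left_mono) auto
  then have "a' * (a * D0 * x + c * y) \<ge> y * (a' * c - a * b' * D0)"
    by (simp add: algebra_simps)
  moreover have "y * (a' * c - a * b' * D0) > 0" using y F1 by simp
  ultimately have "a' * (a * D0 * x + c * y) > 0" by linarith
  then have "a * D0 * x + c * y > 0" using pos by (simp add: zero_less_mult_iff)
  then show ?thesis by simp
next
  case False
  then have x: "x \<ge> 0" by simp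
  show ?thesis
  proof (cases "y < 0")
    case True
    have "a * x > 0" using e1 True pos by (smt (verit) mult_pos_neg)
    have "b * D0 * (a * x) \<ge> b * D0 * (- b * y)"
      using e1 pos by (intro mult_left_mono) auto
    then have "b * (a * D0 * x + c * y) \<ge> (- y) * b * (b * D0 - c)"
      by (simp add: algebra_simps)
    moreover have "(- y) * b * (b * D0 - c) > 0"
    proof -
      have "(- y) * b > 0" using True pos by (intro mult_pos_pos) simp_all
      moreover have "b * D0 - c > 0" using F2 by simp
      ultimately show ?thesis by (rule mult_pos_pos)
    qed
    ultimately have "b * (a * D0 * x + c * y) > 0" by linarith
    then have "a * D0 * x + c * y > 0" using pos by (simp add: zero_less_mult_iff)
    then show ?thesis by simp
  next
    case False
    then have y: "y \<ge> 0" by simp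
    have A: "a * D0 * x \<ge> 0" "c * y \<ge> 0" using x y pos by simp_all
    have B: "a * D0 * x + c * y = 0 \<longrightarrow> x = 0 \<and> y = 0"
    proof
      assume "a * D0 * x + c * y = 0"
      then have "a * D0 * x = 0" "c * y = 0" using A by linarith+
      then show "x = 0 \<and> y = 0" using pos by simp
    qed
    have "a * D0 * x + c * y \<ge> 0" using A by linarith
    with B show ?thesis by blast
  qed
qed


lemma ii_left:
  fixes a b i j g d L D0 :: nat
  assumes pos: "a > 0" "b > 0"
    and line: "a * i + b * j = a * g + b * d" and ne: "(i, j) \<noteq> (g, d)" and gi: "g \<le> i"
    and lt: "a * L < b * D0"
  shows "g * D0 + d * L < i * D0 + j * L"
proof -
  define x where "x = int i - int g"
  define y where "y = int d - int j"
  have lin: "int a * x = int b * y" using line unfolding x_def y_def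
    by (simp add: algebra_simps) (metis of_nat_add of_nat_mult add.commute)
  have x0: "x \<ge> 0" using gi by (simp add: x_def)
  have "x \<noteq> 0"
  proof
    assume "x = 0"
    then have "int b * y = 0" using lin by simp
    then have "y = 0" using pos by simp
    then show False using ne \<open>x = 0\<close> by (simp add: x_def y_def)
  qed
  then have xp: "x > 0" using x0 by simp
  have "int b * (y * int L) = x * (int a * int L)" using lin by (simp add: algebra_simps)
  also have "\<dots> < x * (int b * int D0)"
    using xp lt by (intro mult_strict_left_mono) (simp_all add: of_nat_mult[symmetric] del: of_nat_mult)
  also have "\<dots> = int b * (x * int D0)" by (simp add: algebra_simps)
  finally have "y * int L < x * int D0" using pos by (simp add: mult_less_cancel_left)
  then have "int (g * D0 + d * L) < int (i * D0 + j * L)"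
    unfolding x_def y_def by (simp add: algebra_simps)
  then show ?thesis by (metis of_nat_less_iff)
qed

lemma ii_right:
  fixes a b i j g d C D R D0 :: nat
  assumes pos: "a > 0" "b > 0"
    and line: "a * i + b * j = a * g + b * d" and ne: "(i, j) \<noteq> (C, D)" and iC: "i \<le> C"
    and CD: "C = g + b" "d = D + a"
    and lt: "a * R < b * D0"
  shows "i * D0 + j * R < C * D0 + D * R"
proof -
  define x where "x = int C - int i"
  define y where "y = int j - int D"
  have lin: "int a * x = int b * y"
  proof -
    have "int a * int i + int b * int j = int a * int g + int b * int d"
      using line by (metis of_nat_add of_nat_mult)
    then show ?thesis unfolding x_def y_def CD by (simp add: algebra_simps)
  qed
  have x0: "x \<ge> 0" using iC by (simp add: x_def)
  have "x \<noteq> 0"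
  proof
    assume "x = 0"
    then have "int b * y = 0" using lin by simp
    then have "y = 0" using pos by simp
    then show False using ne \<open>x = 0\<close> by (simp add: x_def y_def)
  qed
  then have xp: "x > 0" using x0 by simp
  have "int b * (y * int R) = x * (int a * int R)" using lin by (simp add: algebra_simps)
  also have "\<dots> < x * (int b * int D0)"
    using xp lt by (intro mult_strict_left_mono) (simp_all add: of_nat_mult[symmetric] del: of_nat_mult)
  also have "\<dots> = int b * (x * int D0)" by (simp add: algebra_simps)
  finally have "y * int R < x * int D0" using pos by (simp add: mult_less_cancel_left)
  then have "int (i * D0 + j * R) < int (C * D0 + D * R)"
    unfolding x_def y_def by (simp add: algebra_simps)
  then show ?thesis by (metis of_nat_less_iff)
qed


lemma bfps_eqI: "(\<And>a b. bcoeff F a b = bcoeff G a b) \<Longrightarrow> F = G"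
  unfolding bcoeff_def by (intro fps_ext) (metis fps_ext)

lemma bcoeff_XX: "bcoeff (fps_const fps_X ^ i * fps_X ^ j) a b = (if a = i \<and> b = j then 1 else 0)"
  unfolding bcoeff_def fps_const_power fps_X_power_mult_right_nth
  by (cases "b < j") (auto simp: fps_nth_fps_const)

lemma Qiter_one: "Qiter p q (Suc 0) = q"
proof (rule bfps_eqI)
  fix a b
  have "bcoeff (Qiter p q (Suc 0)) a b = (\<Sum>i\<le>a+b. \<Sum>j\<le>a+b-i. bcoeff q i j * (if a = i \<and> b = j then 1 else 0))"
    by (simp only: Qiter.simps piter.simps bcoeff_bsubst bcoeff_XX)
  also have "\<dots> = (\<Sum>j\<le>a+b-a. bcoeff q a j * (if a = a \<and> b = j then 1 else 0))"
    by (rule sum_single) auto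
  also have "\<dots> = bcoeff q a b * (if a = a \<and> b = b then 1 else 0)"
    by (rule sum_single) auto
  finally show "bcoeff (Qiter p q (Suc 0)) a b = bcoeff q a b" by simp
qed

primrec geo :: "nat \<Rightarrow> nat \<Rightarrow> nat \<Rightarrow> nat \<Rightarrow> nat" where
  "geo \<delta> x y 0 = x"
| "geo \<delta> x y (Suc m) = x * \<delta> ^ Suc m + y * geo \<delta> x y m"


lemma edge_cong: "edge u v F m l r \<Longrightarrow> m = m' \<Longrightarrow> l = l' \<Longrightarrow> r = r' \<Longrightarrow> edge u v F m' l' r'"
  by simp

lemma core_i:
  fixes p :: "complex fps" and q :: bfps and \<delta> \<gamma> d C D \<alpha> \<beta> \<alpha>' \<beta>' :: nat
  assumes P: "p \<noteq> 0" "subdegree p = \<delta>" "\<delta> \<ge> 1"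
   and pos: "\<alpha> > 0" "\<beta> > 0" "\<alpha>' > 0" "\<beta>' > 0"
   and CD: "C = \<gamma> + \<beta>" "d = D + \<alpha>"
   and EK: "\<And>i j. bcoeff q i j \<noteq> 0 \<Longrightarrow> \<alpha> * \<gamma> + \<beta> * d < \<alpha> * i + \<beta> * j \<or> (\<alpha> * i + \<beta> * j = \<alpha> * \<gamma> + \<beta> * d \<and> \<gamma> \<le> i \<and> i \<le> C)"
   and EK': "\<And>i j. bcoeff q i j \<noteq> 0 \<Longrightarrow> \<alpha>' * \<gamma> + \<beta>' * d \<le> \<alpha>' * i + \<beta>' * j"
   and sl: "\<alpha> * \<beta>' < \<alpha>' * \<beta>"
   and qv: "bcoeff q \<gamma> d \<noteq> 0" "bcoeff q C D \<noteq> 0"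
   and c4: "\<beta>' * \<delta> \<le> \<beta>' * d + \<alpha>' * \<gamma>"
   and ci: "\<beta> * d + \<alpha> * \<gamma> < \<beta> * \<delta>"
  shows "edge \<alpha> \<beta> (Qiter p q (Suc m)) (\<alpha> * geo \<delta> \<gamma> d m + \<beta> * d ^ Suc m) (geo \<delta> \<gamma> d m) (geo \<delta> \<gamma> d m + \<beta> * d ^ m)
     \<and> bcoeff (Qiter p q (Suc m)) (geo \<delta> \<gamma> d m) (d ^ Suc m) \<noteq> 0
     \<and> bcoeff (Qiter p q (Suc m)) (geo \<delta> \<gamma> d m + \<beta> * d ^ m) (D * d ^ m) \<noteq> 0"
proof (induction m)
  case 0
  have "edge \<alpha> \<beta> q (\<alpha> * \<gamma> + \<beta> * d) \<gamma> (\<gamma> + \<beta>)"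
    unfolding edge_def using EK CD by auto
  then show ?case unfolding Qiter_one using qv CD by simp
next
  case (Suc m)
  define D0 where "D0 = \<delta> ^ Suc m"
  define c where "c = \<alpha> * geo \<delta> \<gamma> d m + \<beta> * d ^ Suc m"
  define L where "L = geo \<delta> \<gamma> d m"
  define R where "R = geo \<delta> \<gamma> d m + \<beta> * d ^ m"
  have d1: "d \<ge> 1" using CD pos by simp
  have D0p: "D0 > 0" using P(3) by (simp add: D0_def)
  have F2: "\<beta> * \<delta> ^ Suc k > \<alpha> * geo \<delta> \<gamma> d k + \<beta> * d ^ Suc k" for k
  proof (induction k)
    case 0 then show ?case using ci by (simp add: algebra_simps)
  next
    case (Suc k)
    have a: "(\<alpha> * \<gamma> + \<beta> * d) * \<delta> ^ Suc k < (\<beta> * \<delta>) * \<delta> ^ Suc k"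
      using ci P(3) by (intro mult_strict_right_mono) (simp_all add: algebra_simps)
    have b: "d * (\<alpha> * geo \<delta> \<gamma> d k + \<beta> * d ^ Suc k) \<le> d * (\<beta> * \<delta> ^ Suc k)"
      using Suc.IH by (intro mult_left_mono) simp_all
    have "\<alpha> * geo \<delta> \<gamma> d (Suc k) + \<beta> * d ^ Suc (Suc k)
        = \<alpha> * \<gamma> * \<delta> ^ Suc k + d * (\<alpha> * geo \<delta> \<gamma> d k + \<beta> * d ^ Suc k)"
      by (simp add: algebra_simps)
    also have "\<dots> \<le> \<alpha> * \<gamma> * \<delta> ^ Suc k + d * (\<beta> * \<delta> ^ Suc k)" using b by simp
    also have "\<dots> < \<beta> * \<delta> ^ Suc (Suc k)" using a by (simp add: algebra_simps)
    finally show ?case .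
  qed
  have G: "\<beta>' * \<delta> ^ Suc k \<le> \<alpha>' * geo \<delta> \<gamma> d k + \<beta>' * d ^ Suc k" for k
  proof (induction k)
    case 0 then show ?case using c4 by (simp add: algebra_simps)
  next
    case (Suc k)
    have a: "(\<beta>' * \<delta>) * \<delta> ^ Suc k \<le> (\<beta>' * d + \<alpha>' * \<gamma>) * \<delta> ^ Suc k"
      using c4 by (intro mult_right_mono) simp_all
    have b: "d * (\<beta>' * \<delta> ^ Suc k) \<le> d * (\<alpha>' * geo \<delta> \<gamma> d k + \<beta>' * d ^ Suc k)"
      using Suc.IH by (intro mult_left_mono) simp_all
    have "\<beta>' * \<delta> ^ Suc (Suc k) = (\<beta>' * \<delta>) * \<delta> ^ Suc k" by (simp add: algebra_simps)
    also have "\<dots> \<le> \<beta>' * d * \<delta> ^ Suc k + \<alpha>' * \<gamma> * \<delta> ^ Suc k" using a by (simp add: algebra_simps)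
    also have "\<dots> \<le> \<alpha>' * \<gamma> * \<delta> ^ Suc k + d * (\<alpha>' * geo \<delta> \<gamma> d k + \<beta>' * d ^ Suc k)"
      using b by (simp add: algebra_simps)
    also have "\<dots> = \<alpha>' * geo \<delta> \<gamma> d (Suc k) + \<beta>' * d ^ Suc (Suc k)" by (simp add: algebra_simps)
    finally show ?case .
  qed
  have F1: "\<alpha>' * c > \<alpha> * \<beta>' * D0"
  proof -
    have g: "\<alpha> * (\<beta>' * D0) \<le> \<alpha> * (\<alpha>' * L + \<beta>' * d ^ Suc m)"
      using G[of m] by (intro mult_left_mono) (simp_all add: D0_def L_def)
    then have g': "\<alpha> * (\<beta>' * D0) \<le> \<alpha> * (\<alpha>' * L) + \<alpha> * (\<beta>' * d ^ Suc m)"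
      by (simp only: distrib_left)
    have "d ^ Suc m \<ge> 1" using d1 by simp
    then have "(\<alpha> * \<beta>') * d ^ Suc m < (\<alpha>' * \<beta>) * d ^ Suc m"
      using sl by (intro mult_strict_right_mono) simp_all
    then have s: "\<alpha> * (\<beta>' * d ^ Suc m) < \<alpha>' * (\<beta> * d ^ Suc m)" by (simp only: mult.assoc)
    have e: "\<alpha>' * c = \<alpha> * (\<alpha>' * L) + \<alpha>' * (\<beta> * d ^ Suc m)"
      unfolding c_def L_def by (simp only: distrib_left mult.assoc mult.left_commute)
    have "\<alpha> * (\<beta>' * D0) < \<alpha>' * c" using g' s e by linarith
    then show ?thesis by (simp only: mult.assoc)
  qed
  have F2': "\<beta> * D0 > c" using F2[of m] by (simp add: D0_def c_def)
  have cp: "c > 0" using pos d1 by (simp add: c_def)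
  have Pm: "piter p (Suc m) \<noteq> 0" "subdegree (piter p (Suc m)) = D0"
    using piter_sub[OF P(1,2,3), of "Suc m"] unfolding D0_def by blast+
  have key: "\<alpha> * (\<gamma> * D0) + d * c \<le> \<alpha> * (i * D0) + j * c \<and>
      (\<alpha> * (i * D0) + j * c = \<alpha> * (\<gamma> * D0) + d * c \<longrightarrow> i = \<gamma> \<and> j = d)"
    if nz: "bcoeff q i j \<noteq> 0" for i j
  proof -
    have e1n: "\<alpha> * \<gamma> + \<beta> * d \<le> \<alpha> * i + \<beta> * j" using EK[OF nz] by auto
    have e1: "int \<alpha> * (int i - int \<gamma>) + int \<beta> * (int j - int d) \<ge> 0"
    proof -
      have "int (\<alpha> * \<gamma> + \<beta> * d) \<le> int (\<alpha> * i + \<beta> * j)" using e1n by linarith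
      then show ?thesis by (simp add: algebra_simps)
    qed
    have e2: "int \<alpha>' * (int i - int \<gamma>) + int \<beta>' * (int j - int d) \<ge> 0"
    proof -
      have "int (\<alpha>' * \<gamma> + \<beta>' * d) \<le> int (\<alpha>' * i + \<beta>' * j)" using EK'[OF nz] by linarith
      then show ?thesis by (simp add: algebra_simps)
    qed
    have f1: "int \<alpha>' * int c > int \<alpha> * int \<beta>' * int D0"
      using F1 by (metis of_nat_less_iff of_nat_mult)
    have f2: "int \<beta> * int D0 > int c" using F2' by (metis of_nat_less_iff of_nat_mult)
    have h: "int \<alpha> * int D0 * (int i - int \<gamma>) + int c * (int j - int d) \<ge> 0 \<and>
        (int \<alpha> * int D0 * (int i - int \<gamma>) + int c * (int j - int d) = 0 \<longrightarrow> int i - int \<gamma> = 0 \<and> int j - int d = 0)"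
    proof -
      have pi: "int \<alpha> > 0" "int \<beta> > 0" "int \<alpha>' > 0" "int \<beta>' > 0" "int D0 > 0" "int c > 0"
        using pos D0p cp by simp_all
      show ?thesis by (rule case_i_arith[OF pi f1 f2 e1 e2])
    qed
    have h1: "int (\<alpha> * (\<gamma> * D0) + d * c) \<le> int (\<alpha> * (i * D0) + j * c)"
      using h by (simp add: algebra_simps)
    have h2: "int (\<alpha> * (i * D0) + j * c) = int (\<alpha> * (\<gamma> * D0) + d * c) \<longrightarrow> i = \<gamma> \<and> j = d"
      using h by (simp add: algebra_simps)
    show ?thesis using h1 h2 by (metis of_nat_le_iff)
  qed
  have st: "edge \<alpha> \<beta> (bsubst q (piter p (Suc m)) (Qiter p q (Suc m))) (\<alpha> * (\<gamma> * D0) + d * c) (\<gamma> * D0 + d * L) (\<gamma> * D0 + d * R)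
       \<and> bcoeff (bsubst q (piter p (Suc m)) (Qiter p q (Suc m))) (\<gamma> * D0 + d * L) (d * d ^ Suc m) \<noteq> 0
       \<and> bcoeff (bsubst q (piter p (Suc m)) (Qiter p q (Suc m))) (\<gamma> * D0 + d * R) (d * (D * d ^ m)) \<noteq> 0"
  proof (rule step)
    show "0 < \<alpha>" "0 < \<beta>" using pos by simp_all
    show "piter p (Suc m) \<noteq> 0" "subdegree (piter p (Suc m)) = D0" by (rule Pm(1), rule Pm(2))
    show "1 \<le> D0" using D0p by simp
    show "edge \<alpha> \<beta> (Qiter p q (Suc m)) c L R" using Suc.IH by (simp add: c_def L_def R_def)
    show "bcoeff (Qiter p q (Suc m)) L (d ^ Suc m) \<noteq> 0" using Suc.IH by (simp add: L_def)
    show "bcoeff (Qiter p q (Suc m)) R (D * d ^ m) \<noteq> 0" using Suc.IH by (simp add: R_def)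
    show "\<alpha> * L + \<beta> * d ^ Suc m = c" by (simp add: c_def L_def)
    show "\<alpha> * R + \<beta> * (D * d ^ m) = c" by (simp add: c_def R_def CD algebra_simps)
    show "1 \<le> L + d ^ Suc m" using d1 by (simp add: Suc_le_eq)
    show "1 \<le> R + D * d ^ m" using d1 pos by (simp add: R_def Suc_le_eq)
    show "bcoeff q \<gamma> d \<noteq> 0" "bcoeff q \<gamma> d \<noteq> 0" by (rule qv(1))+
    show "\<alpha> * (\<gamma> * D0) + d * c = \<alpha> * (\<gamma> * D0) + d * c" ..
    fix i j assume nz: "bcoeff q i j \<noteq> 0"
    show "\<alpha> * (\<gamma> * D0) + d * c \<le> \<alpha> * (i * D0) + j * c" using key[OF nz] by simp
    show "\<gamma> * D0 + d * L < i * D0 + j * L"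
      if "\<alpha> * (i * D0) + j * c = \<alpha> * (\<gamma> * D0) + d * c" "(i, j) \<noteq> (\<gamma>, d)"
      using key[OF nz] that by simp
    show "i * D0 + j * R < \<gamma> * D0 + d * R"
      if "\<alpha> * (i * D0) + j * c = \<alpha> * (\<gamma> * D0) + d * c" "(i, j) \<noteq> (\<gamma>, d)"
      using key[OF nz] that by simp
  qed
  have eqs: "\<alpha> * (\<gamma> * D0) + d * c = \<alpha> * geo \<delta> \<gamma> d (Suc m) + \<beta> * d ^ Suc (Suc m)"
     "\<gamma> * D0 + d * L = geo \<delta> \<gamma> d (Suc m)"
     "\<gamma> * D0 + d * R = geo \<delta> \<gamma> d (Suc m) + \<beta> * d ^ Suc m"
     "d * d ^ Suc m = d ^ Suc (Suc m)" "d * (D * d ^ m) = D * d ^ Suc m"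
    by (simp_all add: D0_def c_def L_def R_def algebra_simps)
  show ?case using st unfolding eqs by simp
qed


lemma core_ii:
  fixes p :: "complex fps" and q :: bfps and \<delta> \<gamma> d C D \<alpha> \<beta> :: nat
  assumes P: "p \<noteq> 0" "subdegree p = \<delta>" "\<delta> \<ge> 1"
   and pos: "\<alpha> > 0" "\<beta> > 0" and Dp: "D > 0"
   and CD: "C = \<gamma> + \<beta>" "d = D + \<alpha>"
   and EK: "\<And>i j. bcoeff q i j \<noteq> 0 \<Longrightarrow> \<alpha> * \<gamma> + \<beta> * d < \<alpha> * i + \<beta> * j \<or> (\<alpha> * i + \<beta> * j = \<alpha> * \<gamma> + \<beta> * d \<and> \<gamma> \<le> i \<and> i \<le> C)"
   and qv: "bcoeff q \<gamma> d \<noteq> 0" "bcoeff q C D \<noteq> 0"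
   and cii: "\<beta> * d + \<alpha> * \<gamma> = \<beta> * \<delta>"
  shows "edge \<alpha> \<beta> (Qiter p q (Suc m)) (\<beta> * \<delta> ^ Suc m) (geo \<delta> \<gamma> d m) (geo \<delta> C D m)
     \<and> bcoeff (Qiter p q (Suc m)) (geo \<delta> \<gamma> d m) (d ^ Suc m) \<noteq> 0
     \<and> bcoeff (Qiter p q (Suc m)) (geo \<delta> C D m) (D ^ Suc m) \<noteq> 0"
proof (induction m)
  case 0
  have "edge \<alpha> \<beta> q (\<beta> * \<delta>) \<gamma> C"
    unfolding edge_def using EK cii by (auto simp: algebra_simps)
  then show ?case unfolding Qiter_one using qv by simp
next
  case (Suc m)
  define D0 where "D0 = \<delta> ^ Suc m"
  define c where "c = \<beta> * D0"
  define L where "L = geo \<delta> \<gamma> d m"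
  define R where "R = geo \<delta> C D m"
  have d1: "d \<ge> 1" using CD pos by simp
  have D0p: "D0 > 0" using P(3) by (simp add: D0_def)
  have CDl: "\<alpha> * C + \<beta> * D = \<beta> * \<delta>" using cii CD by (simp add: algebra_simps)
  have F2: "\<alpha> * geo \<delta> \<gamma> d k + \<beta> * d ^ Suc k = \<beta> * \<delta> ^ Suc k" for k
  proof (induction k)
    case 0 then show ?case using cii by (simp add: algebra_simps)
  next
    case (Suc k)
    have "\<alpha> * geo \<delta> \<gamma> d (Suc k) + \<beta> * d ^ Suc (Suc k)
        = \<alpha> * \<gamma> * \<delta> ^ Suc k + d * (\<alpha> * geo \<delta> \<gamma> d k + \<beta> * d ^ Suc k)"
      by (simp add: algebra_simps)
    also have "\<dots> = (\<beta> * d + \<alpha> * \<gamma>) * \<delta> ^ Suc k" using Suc.IH by (simp add: algebra_simps)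
    also have "\<dots> = \<beta> * \<delta> ^ Suc (Suc k)" using cii by (simp add: algebra_simps)
    finally show ?case .
  qed
  have FR: "\<alpha> * geo \<delta> C D k + \<beta> * D ^ Suc k = \<beta> * \<delta> ^ Suc k" for k
  proof (induction k)
    case 0 then show ?case using CDl by (simp add: algebra_simps)
  next
    case (Suc k)
    have "\<alpha> * geo \<delta> C D (Suc k) + \<beta> * D ^ Suc (Suc k)
        = \<alpha> * C * \<delta> ^ Suc k + D * (\<alpha> * geo \<delta> C D k + \<beta> * D ^ Suc k)"
      by (simp add: algebra_simps)
    also have "\<dots> = (\<alpha> * C + \<beta> * D) * \<delta> ^ Suc k" using Suc.IH by (simp add: algebra_simps)
    also have "\<dots> = \<beta> * \<delta> ^ Suc (Suc k)" using CDl by (simp add: algebra_simps)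
    finally show ?case .
  qed
  have Pm: "piter p (Suc m) \<noteq> 0" "subdegree (piter p (Suc m)) = D0"
    using piter_sub[OF P(1,2,3), of "Suc m"] unfolding D0_def by blast+
  have Wform: "\<alpha> * (i * D0) + j * c = D0 * (\<alpha> * i + \<beta> * j)" for i j
    by (simp add: c_def algebra_simps)
  have lvl: "\<alpha> * i + \<beta> * j = \<alpha> * \<gamma> + \<beta> * d \<and> \<gamma> \<le> i \<and> i \<le> C"
    if nz: "bcoeff q i j \<noteq> 0" and eq: "\<alpha> * (i * D0) + j * c = \<alpha> * (\<gamma> * D0) + d * c" for i j
  proof -
    have "D0 * (\<alpha> * i + \<beta> * j) = D0 * (\<alpha> * \<gamma> + \<beta> * d)" using eq unfolding Wform by simp
    then have e: "\<alpha> * i + \<beta> * j = \<alpha> * \<gamma> + \<beta> * d" using D0p by simp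
    then show ?thesis using EK[OF nz] by auto
  qed
  have aL: "\<alpha> * L < \<beta> * D0"
  proof -
    have "\<alpha> * L + \<beta> * d ^ Suc m = \<beta> * D0" using F2[of m] by (simp add: L_def D0_def)
    moreover have "\<beta> * d ^ Suc m > 0" using pos d1 by simp
    ultimately show ?thesis by linarith
  qed
  have aR: "\<alpha> * R < \<beta> * D0"
  proof -
    have "\<alpha> * R + \<beta> * D ^ Suc m = \<beta> * D0" using FR[of m] by (simp add: R_def D0_def)
    moreover have "\<beta> * D ^ Suc m > 0" using pos Dp by simp
    ultimately show ?thesis by linarith
  qed
  have st: "edge \<alpha> \<beta> (bsubst q (piter p (Suc m)) (Qiter p q (Suc m))) (\<alpha> * (\<gamma> * D0) + d * c) (\<gamma> * D0 + d * L) (C * D0 + D * R)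
       \<and> bcoeff (bsubst q (piter p (Suc m)) (Qiter p q (Suc m))) (\<gamma> * D0 + d * L) (d * d ^ Suc m) \<noteq> 0
       \<and> bcoeff (bsubst q (piter p (Suc m)) (Qiter p q (Suc m))) (C * D0 + D * R) (D * D ^ Suc m) \<noteq> 0"
  proof (rule step)
    show "0 < \<alpha>" "0 < \<beta>" using pos by simp_all
    show "piter p (Suc m) \<noteq> 0" "subdegree (piter p (Suc m)) = D0" by (rule Pm(1), rule Pm(2))
    show "1 \<le> D0" using D0p by simp
    show "edge \<alpha> \<beta> (Qiter p q (Suc m)) c L R" using Suc.IH by (simp add: c_def L_def R_def D0_def)
    show "bcoeff (Qiter p q (Suc m)) L (d ^ Suc m) \<noteq> 0" using Suc.IH by (simp add: L_def)
    show "bcoeff (Qiter p q (Suc m)) R (D ^ Suc m) \<noteq> 0" using Suc.IH by (simp add: R_def)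
    show "\<alpha> * L + \<beta> * d ^ Suc m = c" using F2[of m] by (simp add: c_def L_def D0_def)
    show "\<alpha> * R + \<beta> * D ^ Suc m = c" using FR[of m] by (simp add: c_def R_def D0_def)
    show "1 \<le> L + d ^ Suc m" using d1 by (simp add: Suc_le_eq)
    show "1 \<le> R + D ^ Suc m" using Dp by (simp add: Suc_le_eq)
    show "bcoeff q \<gamma> d \<noteq> 0" "bcoeff q C D \<noteq> 0" by (rule qv(1), rule qv(2))
    show "\<alpha> * (C * D0) + D * c = \<alpha> * (\<gamma> * D0) + d * c"
    proof -
      have "\<alpha> * (C * D0) + D * c = D0 * (\<alpha> * C + \<beta> * D)" by (simp add: c_def algebra_simps)
      also have "\<dots> = D0 * (\<alpha> * \<gamma> + \<beta> * d)" using CDl cii by (simp add: algebra_simps)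
      also have "\<dots> = \<alpha> * (\<gamma> * D0) + d * c" by (simp add: c_def algebra_simps)
      finally show ?thesis .
    qed
    fix i j assume nz: "bcoeff q i j \<noteq> 0"
    show "\<alpha> * (\<gamma> * D0) + d * c \<le> \<alpha> * (i * D0) + j * c"
    proof -
      have "\<alpha> * \<gamma> + \<beta> * d \<le> \<alpha> * i + \<beta> * j" using EK[OF nz] by auto
      then have "D0 * (\<alpha> * \<gamma> + \<beta> * d) \<le> D0 * (\<alpha> * i + \<beta> * j)" by (rule mult_left_mono) simp
      then show ?thesis unfolding Wform .
    qed
    show "\<gamma> * D0 + d * L < i * D0 + j * L"
      if "\<alpha> * (i * D0) + j * c = \<alpha> * (\<gamma> * D0) + d * c" "(i, j) \<noteq> (\<gamma>, d)"
      using lvl[OF nz that(1)] ii_left[OF pos _ that(2) _ aL] by blast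
    show "i * D0 + j * R < C * D0 + D * R"
      if "\<alpha> * (i * D0) + j * c = \<alpha> * (\<gamma> * D0) + d * c" "(i, j) \<noteq> (C, D)"
      using lvl[OF nz that(1)] ii_right[OF pos _ that(2) _ CD aR] by blast
  qed
  have eqs: "\<alpha> * (\<gamma> * D0) + d * c = \<beta> * \<delta> ^ Suc (Suc m)"
     "\<gamma> * D0 + d * L = geo \<delta> \<gamma> d (Suc m)"
     "C * D0 + D * R = geo \<delta> C D (Suc m)"
     "d * d ^ Suc m = d ^ Suc (Suc m)" "D * D ^ Suc m = D ^ Suc (Suc m)"
  proof -
    have "\<alpha> * (\<gamma> * D0) + d * c = (\<beta> * d + \<alpha> * \<gamma>) * D0" by (simp add: c_def algebra_simps)
    also have "\<dots> = (\<beta> * \<delta>) * D0" using cii by simp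
    also have "\<dots> = \<beta> * \<delta> ^ Suc (Suc m)" by (simp add: D0_def)
    finally show "\<alpha> * (\<gamma> * D0) + d * c = \<beta> * \<delta> ^ Suc (Suc m)" .
  qed (simp_all add: D0_def L_def R_def algebra_simps)
  show ?case using st unfolding eqs by simp
qed


lemma vertex_support:
  assumes "(real a, real b) extreme_point_of newton_polygon g"
  shows "bcoeff g a b \<noteq> 0"
proof -
  have "(real a, real b) \<in> NPU g"
    using extreme_point_of_convex_hull assms unfolding NP_eq by blast
  then obtain i j where ij: "bcoeff g i j \<noteq> 0" "real i \<le> real a" "real j \<le> real b"
    using NPU_E by fastforce
  have ext: "\<forall>A\<in>newton_polygon g. \<forall>B\<in>newton_polygon g. (real a, real b) \<notin> open_segment A B"
    using assms unfolding extreme_point_of_def by blast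
  have NI: "(x, y) \<in> newton_polygon g" if "real i \<le> x" "real j \<le> y" for x y
    unfolding NP_eq by (rule hull_inc) (rule NPU_I[OF ij(1) that])
  have "i = a"
  proof (rule ccontr)
    assume "i \<noteq> a"
    then have lt: "real i < real a" using ij(2) by simp
    let ?A = "(real i, real b)" and ?B = "(2 * real a - real i, real b)"
    have "(real a, real b) \<in> open_segment ?A ?B"
      unfolding in_segment using lt by (intro conjI exI[of _ "1/2"]) (auto simp: prod_eq_iff algebra_simps)
    moreover have "?A \<in> newton_polygon g" "?B \<in> newton_polygon g" using NI ij lt by auto
    ultimately show False using ext by blast
  qed
  moreover have "j = b"
  proof (rule ccontr)
    assume "j \<noteq> b"
    then have lt: "real j < real b" using ij(3) by simp
    let ?A = "(real a, real j)" and ?B = "(real a, 2 * real b - real j)"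
    have "(real a, real b) \<in> open_segment ?A ?B"
      unfolding in_segment using lt by (intro conjI exI[of _ "1/2"]) (auto simp: prod_eq_iff algebra_simps)
    moreover have "?A \<in> newton_polygon g" "?B \<in> newton_polygon g" using NI ij lt by auto
    ultimately show False using ext by blast
  qed
  ultimately show ?thesis using ij(1) by simp
qed

lemma geo_real:
  "real (geo \<delta> x y m) = real x * (\<Sum>i<Suc m. real \<delta> ^ (Suc m - 1 - i) * real y ^ i)"
proof (induction m)
  case 0 then show ?case by simp
next
  case (Suc m)
  have "(\<Sum>i<Suc (Suc m). real \<delta> ^ (Suc (Suc m) - 1 - i) * real y ^ i)
      = real \<delta> ^ Suc m + (\<Sum>i<Suc m. real \<delta> ^ (Suc m - 1 - i) * real y ^ Suc i)"
    by (subst sum.lessThan_Suc_shift) simp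
  also have "\<dots> = real \<delta> ^ Suc m + real y * (\<Sum>i<Suc m. real \<delta> ^ (Suc m - 1 - i) * real y ^ i)"
    by (simp add: sum_distrib_left algebra_simps)
  finally show ?case using Suc.IH by (simp add: algebra_simps)
qed

lemma pack:
  fixes g :: bfps and \<alpha> \<beta> c L R yL yR :: nat
  assumes uv: "\<alpha> > 0" "\<beta> > 0" and E: "edge \<alpha> \<beta> g c L R"
    and cL: "bcoeff g L yL \<noteq> 0" and cR: "bcoeff g R yR \<noteq> 0"
    and lL: "\<alpha> * L + \<beta> * yL = c" and lR: "\<alpha> * R + \<beta> * yR = c" and LR: "L < R"
  shows "next_vertex g (real L, real yL) (real R, real yR)
    \<and> slope (real L, real yL) (real R, real yR) = - inverse (real \<beta> / real \<alpha>)
    \<and> yint (real L, real yL) (real R, real yR) = real c / real \<beta>"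
proof (intro conjI)
  have ruv: "real \<alpha> > 0" "real \<beta> > 0" using uv by simp_all
  have rl: "real \<alpha> * real L + real \<beta> * real yL = real c" "real \<alpha> * real R + real \<beta> * real yR = real c"
    using lL lR by (metis of_nat_add of_nat_mult)+
  have supp: "redge (real \<alpha>) (real \<beta>) (real c) (real L) (real R) (real i, real j)"
    if "bcoeff g i j \<noteq> 0" for i j
  proof -
    have "c < \<alpha> * i + \<beta> * j \<or> (\<alpha> * i + \<beta> * j = c \<and> L \<le> i \<and> i \<le> R)"
      using E that unfolding edge_def by blast
    then show ?thesis unfolding redge_def
      by (metis fst_conv snd_conv of_nat_add of_nat_mult of_nat_less_iff of_nat_le_iff)
  qed
  have rLR: "real L < real R" using LR by simp
  show "next_vertex g (real L, real yL) (real R, real yR)"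
    by (rule next_vertex_edge[OF ruv supp supp_in_NP[OF cL] rl(1) supp_in_NP[OF cR] rl(2) rLR])
  have dx: "real R - real L > 0" using LR by simp
  have "real \<beta> * (real yR - real yL) = - real \<alpha> * (real R - real L)" using rl by (simp add: algebra_simps)
  then have sl: "(real yR - real yL) / (real R - real L) = - real \<alpha> / real \<beta>"
    using dx ruv by (simp add: field_simps)
  show "slope (real L, real yL) (real R, real yR) = - inverse (real \<beta> / real \<alpha>)"
    unfolding slope_def using sl by (simp add: field_simps)
  show "yint (real L, real yL) (real R, real yR) = real c / real \<beta>"
  proof -
    have "yint (real L, real yL) (real R, real yR) = real yL - real L * ((real yR - real yL) / (real R - real L))"
      unfolding yint_def by (simp only: fst_conv snd_conv times_divide_eq_right)
    also have "\<dots> = real yL + real L * real \<alpha> / real \<beta>" using sl by simp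
    also have "\<dots> = real c / real \<beta>" using rl(1) ruv by (simp add: field_simps)
    finally show ?thesis .
  qed
qed

lemma F2_i:
  fixes \<delta> \<gamma> d \<alpha> \<beta> :: nat
  assumes ci: "\<beta> * d + \<alpha> * \<gamma> < \<beta> * \<delta>" and P: "\<delta> \<ge> 1"
  shows "\<beta> * \<delta> ^ Suc k > \<alpha> * geo \<delta> \<gamma> d k + \<beta> * d ^ Suc k"
proof (induction k)
  case 0 then show ?case using ci by (simp add: algebra_simps)
next
  case (Suc k)
  have a: "(\<alpha> * \<gamma> + \<beta> * d) * \<delta> ^ Suc k < (\<beta> * \<delta>) * \<delta> ^ Suc k"
    using ci P by (intro mult_strict_right_mono) (simp_all add: algebra_simps)
  have b: "d * (\<alpha> * geo \<delta> \<gamma> d k + \<beta> * d ^ Suc k) \<le> d * (\<beta> * \<delta> ^ Suc k)"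
    using Suc.IH by (intro mult_left_mono) simp_all
  have "\<alpha> * geo \<delta> \<gamma> d (Suc k) + \<beta> * d ^ Suc (Suc k)
      = \<alpha> * \<gamma> * \<delta> ^ Suc k + d * (\<alpha> * geo \<delta> \<gamma> d k + \<beta> * d ^ Suc k)"
    by (simp add: algebra_simps)
  also have "\<dots> \<le> \<alpha> * \<gamma> * \<delta> ^ Suc k + d * (\<beta> * \<delta> ^ Suc k)" using b by simp
  also have "\<dots> < \<beta> * \<delta> ^ Suc (Suc k)" using a by (simp add: algebra_simps)
  finally show ?case .
qed


theorem proposition6:
  fixes p :: "complex fps" and q :: bfps and \<delta> :: nat
    and s k :: nat and nv mv :: "nat \<Rightarrow> nat"
  assumes p_conv: "convergent_fps1 p"
    and q_conv: "convergent_fps2 q"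
    and delta_pos: "\<delta> \<ge> 1"
    and p_low: "\<forall>i<\<delta>. fps_nth p i = 0"
    and p_lead: "fps_nth p \<delta> \<noteq> 0"
    and q00: "bcoeff q 0 0 = 0"
    and q_nz: "q \<noteq> 0"
    and verts: "vertices q = {(real (nv i), real (mv i)) | i. i \<in> {1..s}}"
    and nv_mono: "\<forall>i\<in>{1..s}. \<forall>j\<in>{1..s}. i < j \<longrightarrow> nv i < nv j"
    and mv_mono: "\<forall>i\<in>{1..s}. \<forall>j\<in>{1..s}. i < j \<longrightarrow> mv i > mv j"
    and s_gt: "s > 2"
    and k_range: "2 \<le> k" "k \<le> s - 1"
    and case4: "yint (real (nv k), real (mv k)) (real (nv (k+1)), real (mv (k+1))) \<le> real \<delta>"
               "real \<delta> \<le> yint (real (nv (k-1)), real (mv (k-1))) (real (nv k), real (mv k))"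
  shows
   "let \<gamma> = real (nv k); d = real (mv k); C = real (nv (k+1)); D = real (mv (k+1));
        T = yint (real (nv k), real (mv k)) (real (nv (k+1)), real (mv (k+1)));
        l1 = (real (nv k) - real (nv (k-1))) / (real (mv (k-1)) - real (mv k));
        l2 = (real (nv (k+1)) - real (nv k)) / (real (mv k) - real (mv (k+1))) - l1;
        \<gamma>n = (\<lambda>n::nat. \<gamma> * (\<Sum>i<n. real \<delta> ^ (n - 1 - i) * d ^ i));
        Cn = (\<lambda>n::nat. \<gamma>n n - (\<gamma> - C) * d ^ (n - 1));
        Dn = (\<lambda>n::nat. D * d ^ (n - 1));
        Cs = (\<lambda>n::nat. (\<Sum>i<n. real \<delta> ^ (n - 1 - i) * D ^ i) * C);
        Ds = (\<lambda>n::nat. D ^ n)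
    in (real \<delta> > T \<longrightarrow>
          (\<forall>n\<ge>1. next_vertex (Qiter p q n) (\<gamma>n n, d ^ n) (Cn n, Dn n)
              \<and> slope (\<gamma>n n, d ^ n) (Cn n, Dn n) = - inverse (l1 + l2)
              \<and> real \<delta> ^ n > yint (\<gamma>n n, d ^ n) (Cn n, Dn n)))
     \<and> (real \<delta> = T \<and> mv (k+1) > 0 \<longrightarrow>
          (\<forall>n\<ge>1. next_vertex (Qiter p q n) (\<gamma>n n, d ^ n) (Cs n, Ds n)
              \<and> slope (\<gamma>n n, d ^ n) (Cs n, Ds n) = - inverse (l1 + l2)
              \<and> real \<delta> ^ n = yint (\<gamma>n n, d ^ n) (Cs n, Ds n)))"
proof -
  define \<gamma> where "\<gamma> = nv k"
  define d where "d = mv k"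
  define C where "C = nv (k+1)"
  define D where "D = mv (k+1)"
  define n1 where "n1 = nv (k-1)"
  define m1 where "m1 = mv (k-1)"
  have ks: "k - 1 \<in> {1..s}" "k \<in> {1..s}" "k + 1 \<in> {1..s}" "k - 1 < k" "k - 1 + 1 = k"
    using k_range s_gt by auto
  have lt: "n1 < \<gamma>" "\<gamma> < C" "d < m1" "D < d"
    using nv_mono mv_mono ks unfolding \<gamma>_def d_def C_def D_def n1_def m1_def by auto
  define \<alpha> where "\<alpha> = d - D"
  define \<beta> where "\<beta> = C - \<gamma>"
  define \<alpha>' where "\<alpha>' = m1 - d"
  define \<beta>' where "\<beta>' = \<gamma> - n1"
  have pos: "\<alpha> > 0" "\<beta> > 0" "\<alpha>' > 0" "\<beta>' > 0" using lt by (simp_all add: \<alpha>_def \<beta>_def \<alpha>'_def \<beta>'_def)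
  have CD: "C = \<gamma> + \<beta>" "d = D + \<alpha>" and CD': "\<gamma> = n1 + \<beta>'" "m1 = d + \<alpha>'"
    using lt by (simp_all add: \<alpha>_def \<beta>_def \<alpha>'_def \<beta>'_def)
  have EK: "\<And>i j. bcoeff q i j \<noteq> 0 \<Longrightarrow> \<alpha> * \<gamma> + \<beta> * d < \<alpha> * i + \<beta> * j \<or> (\<alpha> * i + \<beta> * j = \<alpha> * \<gamma> + \<beta> * d \<and> \<gamma> \<le> i \<and> i \<le> C)"
    using edge_from_vertices[OF verts nv_mono mv_mono, of k] k_range
    unfolding \<alpha>_def \<beta>_def \<gamma>_def d_def C_def D_def by auto
  have EK0: "\<And>i j. bcoeff q i j \<noteq> 0 \<Longrightarrow> \<alpha>' * n1 + \<beta>' * m1 < \<alpha>' * i + \<beta>' * j \<or> (\<alpha>' * i + \<beta>' * j = \<alpha>' * n1 + \<beta>' * m1 \<and> n1 \<le> i \<and> i \<le> \<gamma>)"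
    using edge_from_vertices[OF verts nv_mono mv_mono, of "k-1"] k_range ks(5)
    unfolding \<alpha>'_def \<beta>'_def \<gamma>_def d_def n1_def m1_def by auto
  have c'eq: "\<alpha>' * n1 + \<beta>' * m1 = \<alpha>' * \<gamma> + \<beta>' * d" unfolding CD' by (simp add: algebra_simps)
  have EK': "\<And>i j. bcoeff q i j \<noteq> 0 \<Longrightarrow> \<alpha>' * \<gamma> + \<beta>' * d \<le> \<alpha>' * i + \<beta>' * j"
    using EK0 c'eq by fastforce
  have vert: "(real (nv t), real (mv t)) extreme_point_of newton_polygon q" if "t \<in> {1..s}" for t
  proof -
    have "(real (nv t), real (mv t)) \<in> vertices q" using verts that by blast
    then show ?thesis unfolding vertices_def by simp
  qed
  have qv: "bcoeff q \<gamma> d \<noteq> 0" "bcoeff q C D \<noteq> 0"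
    using vertex_support[OF vert[OF ks(2)]] vertex_support[OF vert[OF ks(3)]]
    unfolding \<gamma>_def d_def C_def D_def by simp_all
  have sl: "\<alpha> * \<beta>' < \<alpha>' * \<beta>"
  proof -
    have "\<alpha>' * \<gamma> + \<beta>' * d < \<alpha>' * C + \<beta>' * D" using EK0[OF qv(2)] c'eq lt by auto
    then show ?thesis unfolding CD by (simp add: algebra_simps)
  qed
  have pnz: "p \<noteq> 0" using p_lead by auto
  have psub: "subdegree p = \<delta>" by (rule subdegreeI[OF p_lead]) (use p_low in auto)
  have rC: "real C - real \<gamma> = real \<beta>" and rD: "real D - real d = - real \<alpha>"
    and rn: "real \<gamma> - real n1 = real \<beta>'" and rm: "real d - real m1 = - real \<alpha>'"
    using CD CD' by simp_all
  have rpos: "real \<alpha> > 0" "real \<beta> > 0" "real \<alpha>' > 0" "real \<beta>' > 0" using pos by simp_all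
  have Tk: "yint (real \<gamma>, real d) (real C, real D) = (real \<beta> * real d + real \<alpha> * real \<gamma>) / real \<beta>"
  proof -
    have "yint (real \<gamma>, real d) (real C, real D) = real d - real \<gamma> * (real D - real d) / (real C - real \<gamma>)"
      unfolding yint_def by simp
    also have "\<dots> = real d + real \<gamma> * real \<alpha> / real \<beta>" unfolding rC rD by simp
    also have "\<dots> = (real \<beta> * real d + real \<alpha> * real \<gamma>) / real \<beta>" using rpos by (simp add: field_simps)
    finally show ?thesis .
  qed
  have Tk1: "yint (real n1, real m1) (real \<gamma>, real d) = (real \<beta>' * real d + real \<alpha>' * real \<gamma>) / real \<beta>'"
  proof -
    have "yint (real n1, real m1) (real \<gamma>, real d) = (real \<beta>' * real m1 + real \<alpha>' * real n1) / real \<beta>'"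
    proof -
      have "yint (real n1, real m1) (real \<gamma>, real d) = real m1 - real n1 * (real d - real m1) / (real \<gamma> - real n1)"
        unfolding yint_def by simp
      also have "\<dots> = real m1 + real n1 * real \<alpha>' / real \<beta>'" unfolding rn rm by simp
      also have "\<dots> = (real \<beta>' * real m1 + real \<alpha>' * real n1) / real \<beta>'" using rpos by (simp add: field_simps)
      finally show ?thesis .
    qed
    also have "real \<beta>' * real m1 + real \<alpha>' * real n1 = real \<beta>' * real d + real \<alpha>' * real \<gamma>"
      using c'eq by (metis (mono_tags, opaque_lifting) add.commute of_nat_add of_nat_mult)
    finally show ?thesis .
  qed
  have c4: "\<beta>' * \<delta> \<le> \<beta>' * d + \<alpha>' * \<gamma>"
  proof -
    have "real \<delta> \<le> (real \<beta>' * real d + real \<alpha>' * real \<gamma>) / real \<beta>'"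
      using case4(2) Tk1 unfolding \<gamma>_def d_def n1_def m1_def by simp
    then have "real \<beta>' * real \<delta> \<le> real \<beta>' * real d + real \<alpha>' * real \<gamma>"
      using rpos by (simp add: field_simps)
    then show ?thesis by (metis of_nat_add of_nat_mult of_nat_le_iff)
  qed
  have l12: "(real \<gamma> - real (nv (k - 1))) / (real (mv (k - 1)) - real d) +
        ((real C - real \<gamma>) / (real d - real D) -
         (real \<gamma> - real (nv (k - 1))) / (real (mv (k - 1)) - real d)) = real \<beta> / real \<alpha>"
  proof -
    have "real C - real \<gamma> = real \<beta>" "real d - real D = real \<alpha>" using rC rD by simp_all
    then show ?thesis by simp
  qed
  show ?thesis
    unfolding Let_def \<gamma>_def[symmetric] d_def[symmetric] C_def[symmetric] D_def[symmetric]
    unfolding l12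
  proof (rule conjI; intro impI allI)
    fix n :: nat
    assume hi: "yint (real \<gamma>, real d) (real C, real D) < real \<delta>" and n: "1 \<le> n"
    obtain m where m: "n = Suc m" using n by (cases n) auto
    have ci: "\<beta> * d + \<alpha> * \<gamma> < \<beta> * \<delta>"
    proof -
      have "(real \<beta> * real d + real \<alpha> * real \<gamma>) / real \<beta> < real \<delta>" using hi Tk by simp
      then have "real \<beta> * real d + real \<alpha> * real \<gamma> < real \<beta> * real \<delta>" using rpos by (simp add: field_simps)
      then show ?thesis by (metis of_nat_add of_nat_mult of_nat_less_iff)
    qed
    have co: "edge \<alpha> \<beta> (Qiter p q (Suc m)) (\<alpha> * geo \<delta> \<gamma> d m + \<beta> * d ^ Suc m) (geo \<delta> \<gamma> d m) (geo \<delta> \<gamma> d m + \<beta> * d ^ m)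
     \<and> bcoeff (Qiter p q (Suc m)) (geo \<delta> \<gamma> d m) (d ^ Suc m) \<noteq> 0
     \<and> bcoeff (Qiter p q (Suc m)) (geo \<delta> \<gamma> d m + \<beta> * d ^ m) (D * d ^ m) \<noteq> 0"
      by (rule core_i[OF pnz psub delta_pos pos CD EK EK' sl qv c4 ci])
    have d1: "d \<ge> 1" using lt by simp
    have pk: "next_vertex (Qiter p q (Suc m)) (real (geo \<delta> \<gamma> d m), real (d ^ Suc m)) (real (geo \<delta> \<gamma> d m + \<beta> * d ^ m), real (D * d ^ m))
      \<and> slope (real (geo \<delta> \<gamma> d m), real (d ^ Suc m)) (real (geo \<delta> \<gamma> d m + \<beta> * d ^ m), real (D * d ^ m)) = - inverse (real \<beta> / real \<alpha>)
      \<and> yint (real (geo \<delta> \<gamma> d m), real (d ^ Suc m)) (real (geo \<delta> \<gamma> d m + \<beta> * d ^ m), real (D * d ^ m)) = real (\<alpha> * geo \<delta> \<gamma> d m + \<beta> * d ^ Suc m) / real \<beta>"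
    proof (rule pack[OF pos(1,2)])
      show "edge \<alpha> \<beta> (Qiter p q (Suc m)) (\<alpha> * geo \<delta> \<gamma> d m + \<beta> * d ^ Suc m) (geo \<delta> \<gamma> d m) (geo \<delta> \<gamma> d m + \<beta> * d ^ m)"
        using co by blast
      show "bcoeff (Qiter p q (Suc m)) (geo \<delta> \<gamma> d m) (d ^ Suc m) \<noteq> 0" using co by blast
      show "bcoeff (Qiter p q (Suc m)) (geo \<delta> \<gamma> d m + \<beta> * d ^ m) (D * d ^ m) \<noteq> 0" using co by blast
      show "\<alpha> * geo \<delta> \<gamma> d m + \<beta> * d ^ Suc m = \<alpha> * geo \<delta> \<gamma> d m + \<beta> * d ^ Suc m" ..
      show "\<alpha> * (geo \<delta> \<gamma> d m + \<beta> * d ^ m) + \<beta> * (D * d ^ m) = \<alpha> * geo \<delta> \<gamma> d m + \<beta> * d ^ Suc m"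
        unfolding CD(2) by (simp add: algebra_simps)
      show "geo \<delta> \<gamma> d m < geo \<delta> \<gamma> d m + \<beta> * d ^ m" using pos d1 by simp
    qed
    have e1: "real \<gamma> * (\<Sum>i<n. real \<delta> ^ (n - 1 - i) * real d ^ i) = real (geo \<delta> \<gamma> d m)"
      unfolding m geo_real ..
    have e3: "real (geo \<delta> \<gamma> d m) - (real \<gamma> - real C) * real d ^ (n - 1)
        = real (geo \<delta> \<gamma> d m + \<beta> * d ^ m)"
      using rC m by (simp add: algebra_simps)
    have e2: "real d ^ n = real (d ^ Suc m)" using m by simp
    have e4: "real D * real d ^ (n - 1) = real (D * d ^ m)" using m by simp
    have F2: "\<beta> * \<delta> ^ Suc m > \<alpha> * geo \<delta> \<gamma> d m + \<beta> * d ^ Suc m" by (rule F2_i[OF ci delta_pos])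
    have "real (\<alpha> * geo \<delta> \<gamma> d m + \<beta> * d ^ Suc m) < real \<beta> * real \<delta> ^ n"
      using F2 m by (metis of_nat_less_iff of_nat_mult of_nat_power)
    then have yi: "real (\<alpha> * geo \<delta> \<gamma> d m + \<beta> * d ^ Suc m) / real \<beta> < real \<delta> ^ n"
      using rpos by (simp add: field_simps)
    have e1': "real \<gamma> * (\<Sum>i<Suc m. real \<delta> ^ (Suc m - 1 - i) * real d ^ i) = real (geo \<delta> \<gamma> d m)"
      by (rule geo_real[symmetric])
    have e3': "real (geo \<delta> \<gamma> d m) - (real \<gamma> - real C) * real d ^ (Suc m - 1) = real (geo \<delta> \<gamma> d m + \<beta> * d ^ m)"
      using rC by (simp add: algebra_simps)
    have e2': "real d ^ Suc m = real (d ^ Suc m)" by simp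
    have e4': "real D * real d ^ (Suc m - 1) = real (D * d ^ m)" by simp
    have yi': "real (\<alpha> * geo \<delta> \<gamma> d m + \<beta> * d ^ Suc m) / real \<beta> < real \<delta> ^ Suc m" using yi m by simp
    have G: "next_vertex (Qiter p q (Suc m)) (real \<gamma> * (\<Sum>i<Suc m. real \<delta> ^ (Suc m - 1 - i) * real d ^ i), real d ^ Suc m)
           (real \<gamma> * (\<Sum>i<Suc m. real \<delta> ^ (Suc m - 1 - i) * real d ^ i) - (real \<gamma> - real C) * real d ^ (Suc m - 1), real D * real d ^ (Suc m - 1)) \<and>
          slope (real \<gamma> * (\<Sum>i<Suc m. real \<delta> ^ (Suc m - 1 - i) * real d ^ i), real d ^ Suc m)
           (real \<gamma> * (\<Sum>i<Suc m. real \<delta> ^ (Suc m - 1 - i) * real d ^ i) - (real \<gamma> - real C) * real d ^ (Suc m - 1), real D * real d ^ (Suc m - 1)) =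
          - inverse (real \<beta> / real \<alpha>) \<and>
          yint (real \<gamma> * (\<Sum>i<Suc m. real \<delta> ^ (Suc m - 1 - i) * real d ^ i), real d ^ Suc m)
           (real \<gamma> * (\<Sum>i<Suc m. real \<delta> ^ (Suc m - 1 - i) * real d ^ i) - (real \<gamma> - real C) * real d ^ (Suc m - 1), real D * real d ^ (Suc m - 1))
          < real \<delta> ^ Suc m"
      unfolding e1' e3' e2' e4' using pk yi' by simp
    show "next_vertex (Qiter p q n) (real \<gamma> * (\<Sum>i<n. real \<delta> ^ (n - 1 - i) * real d ^ i), real d ^ n)
           (real \<gamma> * (\<Sum>i<n. real \<delta> ^ (n - 1 - i) * real d ^ i) - (real \<gamma> - real C) * real d ^ (n - 1), real D * real d ^ (n - 1)) \<and>
          slope (real \<gamma> * (\<Sum>i<n. real \<delta> ^ (n - 1 - i) * real d ^ i), real d ^ n)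
           (real \<gamma> * (\<Sum>i<n. real \<delta> ^ (n - 1 - i) * real d ^ i) - (real \<gamma> - real C) * real d ^ (n - 1), real D * real d ^ (n - 1)) =
          - inverse (real \<beta> / real \<alpha>) \<and>
          yint (real \<gamma> * (\<Sum>i<n. real \<delta> ^ (n - 1 - i) * real d ^ i), real d ^ n)
           (real \<gamma> * (\<Sum>i<n. real \<delta> ^ (n - 1 - i) * real d ^ i) - (real \<gamma> - real C) * real d ^ (n - 1), real D * real d ^ (n - 1))
          < real \<delta> ^ n"
      unfolding m by (rule G)
  next
    fix n :: nat
    assume hii: "real \<delta> = yint (real \<gamma>, real d) (real C, real D) \<and> 0 < D" and n: "1 \<le> n"
    obtain m where m: "n = Suc m" using n by (cases n) auto
    have Dp: "D > 0" using hii by simp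
    have cii: "\<beta> * d + \<alpha> * \<gamma> = \<beta> * \<delta>"
    proof -
      have "(real \<beta> * real d + real \<alpha> * real \<gamma>) / real \<beta> = real \<delta>" using hii Tk by simp
      then have "real \<beta> * real d + real \<alpha> * real \<gamma> = real \<beta> * real \<delta>" using rpos by (simp add: field_simps)
      then show ?thesis by (metis of_nat_add of_nat_mult of_nat_eq_iff)
    qed
    have co: "edge \<alpha> \<beta> (Qiter p q (Suc m)) (\<beta> * \<delta> ^ Suc m) (geo \<delta> \<gamma> d m) (geo \<delta> C D m)
     \<and> bcoeff (Qiter p q (Suc m)) (geo \<delta> \<gamma> d m) (d ^ Suc m) \<noteq> 0
     \<and> bcoeff (Qiter p q (Suc m)) (geo \<delta> C D m) (D ^ Suc m) \<noteq> 0"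
      by (rule core_ii[OF pnz psub delta_pos pos(1,2) Dp CD EK qv cii])
    have lineL: "\<alpha> * geo \<delta> \<gamma> d m + \<beta> * d ^ Suc m = \<beta> * \<delta> ^ Suc m"
    proof (induction m)
      case 0 then show ?case using cii by (simp add: algebra_simps)
    next
      case (Suc k)
      have "\<alpha> * geo \<delta> \<gamma> d (Suc k) + \<beta> * d ^ Suc (Suc k)
          = \<alpha> * \<gamma> * \<delta> ^ Suc k + d * (\<alpha> * geo \<delta> \<gamma> d k + \<beta> * d ^ Suc k)"
        by (simp add: algebra_simps)
      also have "\<dots> = (\<beta> * d + \<alpha> * \<gamma>) * \<delta> ^ Suc k" using Suc.IH by (simp add: algebra_simps)
      also have "\<dots> = \<beta> * \<delta> ^ Suc (Suc k)" using cii by (simp add: algebra_simps)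
      finally show ?case .
    qed
    have CDl: "\<alpha> * C + \<beta> * D = \<beta> * \<delta>" using cii CD by (simp add: algebra_simps)
    have lineR: "\<alpha> * geo \<delta> C D m + \<beta> * D ^ Suc m = \<beta> * \<delta> ^ Suc m"
    proof (induction m)
      case 0 then show ?case using CDl by (simp add: algebra_simps)
    next
      case (Suc k)
      have "\<alpha> * geo \<delta> C D (Suc k) + \<beta> * D ^ Suc (Suc k)
          = \<alpha> * C * \<delta> ^ Suc k + D * (\<alpha> * geo \<delta> C D k + \<beta> * D ^ Suc k)"
        by (simp add: algebra_simps)
      also have "\<dots> = (\<alpha> * C + \<beta> * D) * \<delta> ^ Suc k" using Suc.IH by (simp add: algebra_simps)
      also have "\<dots> = \<beta> * \<delta> ^ Suc (Suc k)" using CDl by (simp add: algebra_simps)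
      finally show ?case .
    qed
    have LR: "geo \<delta> \<gamma> d m < geo \<delta> C D m"
    proof -
      have "D ^ Suc m < d ^ Suc m" using lt(4) by (intro power_strict_mono) simp_all
      then have "\<beta> * D ^ Suc m < \<beta> * d ^ Suc m" using pos by simp
      then have "\<alpha> * geo \<delta> \<gamma> d m < \<alpha> * geo \<delta> C D m" using lineL lineR by linarith
      then show ?thesis by simp
    qed
    have pk: "next_vertex (Qiter p q (Suc m)) (real (geo \<delta> \<gamma> d m), real (d ^ Suc m)) (real (geo \<delta> C D m), real (D ^ Suc m))
      \<and> slope (real (geo \<delta> \<gamma> d m), real (d ^ Suc m)) (real (geo \<delta> C D m), real (D ^ Suc m)) = - inverse (real \<beta> / real \<alpha>)
      \<and> yint (real (geo \<delta> \<gamma> d m), real (d ^ Suc m)) (real (geo \<delta> C D m), real (D ^ Suc m)) = real (\<beta> * \<delta> ^ Suc m) / real \<beta>"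
    proof (rule pack[OF pos(1,2)])
      show "edge \<alpha> \<beta> (Qiter p q (Suc m)) (\<beta> * \<delta> ^ Suc m) (geo \<delta> \<gamma> d m) (geo \<delta> C D m)"
        using co by blast
      show "bcoeff (Qiter p q (Suc m)) (geo \<delta> \<gamma> d m) (d ^ Suc m) \<noteq> 0" using co by blast
      show "bcoeff (Qiter p q (Suc m)) (geo \<delta> C D m) (D ^ Suc m) \<noteq> 0" using co by blast
      show "\<alpha> * geo \<delta> \<gamma> d m + \<beta> * d ^ Suc m = \<beta> * \<delta> ^ Suc m" by (rule lineL)
      show "\<alpha> * geo \<delta> C D m + \<beta> * D ^ Suc m = \<beta> * \<delta> ^ Suc m" by (rule lineR)
      show "geo \<delta> \<gamma> d m < geo \<delta> C D m" by (rule LR)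
    qed
    have e1: "real \<gamma> * (\<Sum>i<n. real \<delta> ^ (n - 1 - i) * real d ^ i) = real (geo \<delta> \<gamma> d m)"
      unfolding m geo_real ..
    have e3: "(\<Sum>i<n. real \<delta> ^ (n - 1 - i) * real D ^ i) * real C = real (geo \<delta> C D m)"
      unfolding m geo_real by (simp add: mult.commute)
    have e2: "real d ^ n = real (d ^ Suc m)" using m by simp
    have e4: "real D ^ n = real (D ^ Suc m)" using m by simp
    have yi: "real (\<beta> * \<delta> ^ Suc m) / real \<beta> = real \<delta> ^ n" using rpos m by simp
    show "next_vertex (Qiter p q n) (real \<gamma> * (\<Sum>i<n. real \<delta> ^ (n - 1 - i) * real d ^ i), real d ^ n)
           ((\<Sum>i<n. real \<delta> ^ (n - 1 - i) * real D ^ i) * real C, real D ^ n) \<and>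
          slope (real \<gamma> * (\<Sum>i<n. real \<delta> ^ (n - 1 - i) * real d ^ i), real d ^ n)
           ((\<Sum>i<n. real \<delta> ^ (n - 1 - i) * real D ^ i) * real C, real D ^ n) =
          - inverse (real \<beta> / real \<alpha>) \<and>
          real \<delta> ^ n =
          yint (real \<gamma> * (\<Sum>i<n. real \<delta> ^ (n - 1 - i) * real d ^ i), real d ^ n)
           ((\<Sum>i<n. real \<delta> ^ (n - 1 - i) * real D ^ i) * real C, real D ^ n)"
      unfolding e3 e1 e2 e4 using pk yi m by simp
  qed
qed

end
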